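(* Let $E$ be a slim, semimodular diagram such that $c_\ell(E)$ is a coatom of $E$. Then the ideal ${\downarrow}c_\ell(E)=\{x\in E: x\le c_\ell(E)\}$ is a chain contained in $C_\ell(E)$; the set $E^{\circ}=E\setminus{\downarrow}c_\ell(E)$ is a sublattice of $E$ and (with the induced diagram) a slim, semimodular diagram with $|E^{\circ}|=|E|-\operatorname{length}(E)$; and $E^{\circ}$ determines $E$ up to similarity.
   Context: A slim, semimodular diagram is a planar Hasse diagram of a finite (upper) semimodular lattice whose set of join-irreducible elements contains no three-element antichain; diagrams are considered up to similarity (lattice isomorphism preserving left-to-right order of upper covers and of lower covers at every element). The left boundary chain $C_\ell(E)$ is the maximal chain from $0$ to $1$ forming the left boundary of the diagram. An element is doubly irreducible if it has at most one upper cover and at most one lower cover. $c_\ell(E)$ is the smallest doubly irreducible element of $C_\ell(E)$. $\operatorname{length}(E)$ is the length of the lattice (number of edges in a maximal chain). A coatom is an element covered by $1$. *)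

theory Defs
  imports "HOL-Algebra.Lattice"
begin

(* A (planar) diagram is represented, up to similarity, by a finite lattice L
   (HOL-Algebra gorder with eq = (=)) together with its left-right relation
   "lam x y" = "x is to the left of y" on incomparable pairs (Kelly--Rival).
   The relations  x <= y or lam x y  and  x <= y or lam y x  are both linear
   orders of the carrier (a realizer of dimension 2).  *)

definition covers :: "'a gorder \<Rightarrow> 'a \<Rightarrow> 'a \<Rightarrow> bool" where
  "covers L x y \<longleftrightarrow> x \<in> carrier L \<and> y \<in> carrier L \<and> x \<sqsubset>\<^bsub>L\<^esub> y \<and>
     \<not> (\<exists>z\<in>carrier L. x \<sqsubset>\<^bsub>L\<^esub> z \<and> z \<sqsubset>\<^bsub>L\<^esub> y)"

definition incomparable :: "'a gorder \<Rightarrow> 'a \<Rightarrow> 'a \<Rightarrow> bool" where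
  "incomparable L x y \<longleftrightarrow> \<not> x \<sqsubseteq>\<^bsub>L\<^esub> y \<and> \<not> y \<sqsubseteq>\<^bsub>L\<^esub> x"

definition planar_diagram :: "'a gorder \<Rightarrow> ('a \<Rightarrow> 'a \<Rightarrow> bool) \<Rightarrow> bool" where
  "planar_diagram L lam \<longleftrightarrow>
     lattice L \<and> finite (carrier L) \<and> carrier L \<noteq> {} \<and>
     (\<forall>x y. lam x y \<longrightarrow> x \<in> carrier L \<and> y \<in> carrier L \<and> incomparable L x y) \<and>
     (\<forall>x\<in>carrier L. \<forall>y\<in>carrier L. incomparable L x y \<longrightarrow> lam x y \<or> lam y x) \<and>
     (\<forall>x y. \<not> (lam x y \<and> lam y x)) \<and>
     (\<forall>x\<in>carrier L. \<forall>y\<in>carrier L. \<forall>z\<in>carrier L.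
        (x \<sqsubseteq>\<^bsub>L\<^esub> y \<or> lam x y) \<longrightarrow> (y \<sqsubseteq>\<^bsub>L\<^esub> z \<or> lam y z) \<longrightarrow> (x \<sqsubseteq>\<^bsub>L\<^esub> z \<or> lam x z)) \<and>
     (\<forall>x\<in>carrier L. \<forall>y\<in>carrier L. \<forall>z\<in>carrier L.
        (x \<sqsubseteq>\<^bsub>L\<^esub> y \<or> lam y x) \<longrightarrow> (y \<sqsubseteq>\<^bsub>L\<^esub> z \<or> lam z y) \<longrightarrow> (x \<sqsubseteq>\<^bsub>L\<^esub> z \<or> lam z x))"

definition semimodular :: "'a gorder \<Rightarrow> bool" where
  "semimodular L \<longleftrightarrow> (\<forall>a\<in>carrier L. \<forall>b\<in>carrier L.
      covers L (a \<sqinter>\<^bsub>L\<^esub> b) a \<longrightarrow> covers L b (a \<squnion>\<^bsub>L\<^esub> b))"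

definition join_irreducible :: "'a gorder \<Rightarrow> 'a \<Rightarrow> bool" where
  "join_irreducible L x \<longleftrightarrow> x \<in> carrier L \<and> x \<noteq> \<bottom>\<^bsub>L\<^esub> \<and>
     (\<forall>y\<in>carrier L. \<forall>z\<in>carrier L. x = y \<squnion>\<^bsub>L\<^esub> z \<longrightarrow> x = y \<or> x = z)"

definition slim :: "'a gorder \<Rightarrow> bool" where
  "slim L \<longleftrightarrow> \<not> (\<exists>x y z. join_irreducible L x \<and> join_irreducible L y \<and> join_irreducible L z \<and>
       incomparable L x y \<and> incomparable L y z \<and> incomparable L x z)"

definition slim_semimodular_diagram :: "'a gorder \<Rightarrow> ('a \<Rightarrow> 'a \<Rightarrow> bool) \<Rightarrow> bool" where
  "slim_semimodular_diagram L lam \<longleftrightarrow> planar_diagram L lam \<and> slim L \<and> semimodular L"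

definition left_boundary :: "'a gorder \<Rightarrow> ('a \<Rightarrow> 'a \<Rightarrow> bool) \<Rightarrow> 'a set" where
  "left_boundary L lam = {x \<in> carrier L. \<forall>y\<in>carrier L. \<not> lam y x}"

definition doubly_irreducible :: "'a gorder \<Rightarrow> 'a \<Rightarrow> bool" where
  "doubly_irreducible L x \<longleftrightarrow> x \<in> carrier L \<and>
     card {y. covers L x y} \<le> 1 \<and> card {y. covers L y x} \<le> 1"

definition is_cl :: "'a gorder \<Rightarrow> ('a \<Rightarrow> 'a \<Rightarrow> bool) \<Rightarrow> 'a \<Rightarrow> bool" where
  "is_cl L lam c \<longleftrightarrow> c \<in> left_boundary L lam \<and> doubly_irreducible L c \<and>
     (\<forall>d\<in>left_boundary L lam. doubly_irreducible L d \<longrightarrow> c \<sqsubseteq>\<^bsub>L\<^esub> d)"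

definition coatom :: "'a gorder \<Rightarrow> 'a \<Rightarrow> bool" where
  "coatom L c \<longleftrightarrow> covers L c \<top>\<^bsub>L\<^esub>"

definition down_set :: "'a gorder \<Rightarrow> 'a \<Rightarrow> 'a set" where
  "down_set L c = {x \<in> carrier L. x \<sqsubseteq>\<^bsub>L\<^esub> c}"

definition is_chain :: "'a gorder \<Rightarrow> 'a set \<Rightarrow> bool" where
  "is_chain L S \<longleftrightarrow> S \<subseteq> carrier L \<and> (\<forall>x\<in>S. \<forall>y\<in>S. x \<sqsubseteq>\<^bsub>L\<^esub> y \<or> y \<sqsubseteq>\<^bsub>L\<^esub> x)"

definition sublattice :: "'a gorder \<Rightarrow> 'a set \<Rightarrow> bool" where
  "sublattice L S \<longleftrightarrow> S \<subseteq> carrier L \<and> S \<noteq> {} \<and>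
     (\<forall>x\<in>S. \<forall>y\<in>S. x \<squnion>\<^bsub>L\<^esub> y \<in> S \<and> x \<sqinter>\<^bsub>L\<^esub> y \<in> S)"

(* length = number of edges of a longest (maximal) chain *)
definition lattice_length :: "'a gorder \<Rightarrow> nat" where
  "lattice_length L = Max {card C | C. is_chain L C} - 1"

definition induced_order :: "'a gorder \<Rightarrow> 'a set \<Rightarrow> 'a gorder" where
  "induced_order L S = L\<lparr>carrier := S\<rparr>"

definition induced_left :: "('a \<Rightarrow> 'a \<Rightarrow> bool) \<Rightarrow> 'a set \<Rightarrow> 'a \<Rightarrow> 'a \<Rightarrow> bool" where
  "induced_left lam S x y \<longleftrightarrow> lam x y \<and> x \<in> S \<and> y \<in> S"

definition similar :: "'a gorder \<Rightarrow> ('a \<Rightarrow> 'a \<Rightarrow> bool) \<Rightarrow> 'b gorder \<Rightarrow> ('b \<Rightarrow> 'b \<Rightarrow> bool) \<Rightarrow> bool" where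
  "similar L lam L' lam' \<longleftrightarrow> (\<exists>\<phi>. bij_betw \<phi> (carrier L) (carrier L') \<and>
     (\<forall>x\<in>carrier L. \<forall>y\<in>carrier L. x \<sqsubseteq>\<^bsub>L\<^esub> y \<longleftrightarrow> \<phi> x \<sqsubseteq>\<^bsub>L'\<^esub> \<phi> y) \<and>
     (\<forall>x y z. covers L x y \<and> covers L x z \<longrightarrow> (lam y z \<longleftrightarrow> lam' (\<phi> y) (\<phi> z))) \<and>
     (\<forall>x y z. covers L y x \<and> covers L z x \<longrightarrow> (lam y z \<longleftrightarrow> lam' (\<phi> y) (\<phi> z))))"

end

theory Submission
  imports Defs
begin

lemma finite_max_nat:
  assumes "finite A" "A \<noteq> {}"
  shows "\<exists>m\<in>A. \<forall>a\<in>A. (f a :: nat) \<le> f m"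
proof -
  have "Max (f ` A) \<in> f ` A" using assms by simp
  then obtain m where m: "m \<in> A" "f m = Max (f ` A)" by auto
  show ?thesis
  proof (intro bexI[of _ m] ballI)
    fix a assume "a \<in> A"
    then have "f a \<le> Max (f ` A)" using assms by simp
    then show "f a \<le> f m" using m by simp
  qed (rule m(1))
qed

lemma finite_min_nat:
  assumes "finite A" "A \<noteq> {}"
  shows "\<exists>m\<in>A. \<forall>a\<in>A. f m \<le> (f a :: nat)"
proof -
  have "Min (f ` A) \<in> f ` A" using assms by simp
  then obtain m where m: "m \<in> A" "f m = Min (f ` A)" by auto
  show ?thesis
  proof (intro bexI[of _ m] ballI)
    fix a assume "a \<in> A"
    then have "Min (f ` A) \<le> f a" using assms by simp
    then show "f m \<le> f a" using m by simp
  qed (rule m(1))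
qed

lemma finite_total_min:
  assumes "finite A" "A \<noteq> {}"
    and tot: "\<And>a b. a \<in> A \<Longrightarrow> b \<in> A \<Longrightarrow> R a b \<or> R b a"
    and tr: "\<And>a b d. a \<in> A \<Longrightarrow> b \<in> A \<Longrightarrow> d \<in> A \<Longrightarrow> R a b \<Longrightarrow> R b d \<Longrightarrow> R a d"
  shows "\<exists>m\<in>A. \<forall>a\<in>A. R m a"
proof -
  have "\<forall>B. B \<subseteq> A \<longrightarrow> B \<noteq> {} \<longrightarrow> (\<exists>m\<in>B. \<forall>a\<in>B. R m a)"
  proof (intro allI impI)
    fix B assume BA: "B \<subseteq> A" and Bne: "B \<noteq> {}"
    have fB: "finite B" using BA assms(1) finite_subset by metis
    show "\<exists>m\<in>B. \<forall>a\<in>B. R m a"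
      using fB Bne BA
    proof (induction B rule: finite_ne_induct)
      case (singleton x)
      have "R x x" using tot[of x x] singleton by simp
      then show ?case by simp
    next
      case (insert x F)
      have FA: "F \<subseteq> A" and xA: "x \<in> A" using insert.prems by simp_all
      obtain m where m: "m \<in> F" "\<forall>a\<in>F. R m a" using insert.IH[OF FA] by blast
      have mA: "m \<in> A" using m(1) FA by (simp add: subset_iff)
      show ?case
      proof (cases "R m x")
        case True
        have "\<forall>a\<in>insert x F. R m a" using True m(2) by simp
        then show ?thesis using m(1) by blast
      next
        case False
        then have xm: "R x m" using tot[OF mA xA] by simp
        have "\<forall>a\<in>insert x F. R x a"
        proof
          fix a assume a: "a \<in> insert x F"
          show "R x a"
          proof (cases "a = x")
            case True then show ?thesis using tot[OF xA xA] by simp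
          next
            case False
            then have aF: "a \<in> F" using a by simp
            then have aA: "a \<in> A" using FA by (simp add: subset_iff)
            show ?thesis using tr[OF xA mA aA xm] m(2) aF by simp
          qed
        qed
        then show ?thesis by blast
      qed
    qed
  qed
  then show ?thesis using assms(2) by blast
qed

locale pd =
  fixes L :: "'a gorder" (structure) and lam :: "'a \<Rightarrow> 'a \<Rightarrow> bool"
  assumes pd: "planar_diagram L lam"
begin

lemma lat: "lattice L" using pd unfolding planar_diagram_def by (elim conjE) assumption
lemma fin: "finite (carrier L)" using pd unfolding planar_diagram_def by (elim conjE) assumption
lemma ne: "carrier L \<noteq> {}" using pd unfolding planar_diagram_def by (elim conjE) assumption

sublocale lattice L by (rule lat)

lemma bot_ex: "\<exists>x. least L x (carrier L)"
proof -
  have g: "greatest L (\<Sqinter>(carrier L)) (Lower L (carrier L))"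
    using finite_inf_greatest fin ne by auto
  have "\<Sqinter>(carrier L) \<in> carrier L" using fin ne by simp
  then show ?thesis using g unfolding least_def greatest_def Lower_def by auto
qed

lemma top_ex: "\<exists>x. greatest L x (carrier L)"
proof -
  have g: "least L (\<Squnion>(carrier L)) (Upper L (carrier L))"
    using finite_sup_least fin ne by auto
  have "\<Squnion>(carrier L) \<in> carrier L" using fin ne by simp
  then show ?thesis using g unfolding least_def greatest_def Upper_def by auto
qed

sublocale bounded_lattice L
  by unfold_locales (auto intro: bot_ex top_ex)

lemma P4: "\<forall>x y. lam x y \<longrightarrow> x \<in> carrier L \<and> y \<in> carrier L \<and> incomparable L x y"
  using pd unfolding planar_diagram_def by (elim conjE) assumption
lemma P5: "\<forall>x\<in>carrier L. \<forall>y\<in>carrier L. incomparable L x y \<longrightarrow> lam x y \<or> lam y x"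
  using pd unfolding planar_diagram_def by (elim conjE) assumption
lemma P6: "\<forall>x y. \<not> (lam x y \<and> lam y x)"
  using pd unfolding planar_diagram_def by (elim conjE) assumption
lemma P7: "\<forall>x\<in>carrier L. \<forall>y\<in>carrier L. \<forall>z\<in>carrier L.
        (x \<sqsubseteq> y \<or> lam x y) \<longrightarrow> (y \<sqsubseteq> z \<or> lam y z) \<longrightarrow> (x \<sqsubseteq> z \<or> lam x z)"
  using pd unfolding planar_diagram_def by (elim conjE) assumption
lemma P8: "\<forall>x\<in>carrier L. \<forall>y\<in>carrier L. \<forall>z\<in>carrier L.
        (x \<sqsubseteq> y \<or> lam y x) \<longrightarrow> (y \<sqsubseteq> z \<or> lam z y) \<longrightarrow> (x \<sqsubseteq> z \<or> lam z x)"
  using pd unfolding planar_diagram_def by (elim conjE) assumption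

lemma lam_inc: "lam x y \<Longrightarrow> x \<in> carrier L \<and> y \<in> carrier L \<and> \<not> x \<sqsubseteq> y \<and> \<not> y \<sqsubseteq> x"
  using P4 unfolding incomparable_def by blast

lemma lam_total: "x \<in> carrier L \<Longrightarrow> y \<in> carrier L \<Longrightarrow> \<not> x \<sqsubseteq> y \<Longrightarrow> \<not> y \<sqsubseteq> x \<Longrightarrow> lam x y \<or> lam y x"
  using P5 unfolding incomparable_def by blast

lemma lam_asym: "lam x y \<Longrightarrow> \<not> lam y x"
  using P6 by blast

lemma lam_irrefl: "\<not> lam x x"
  using lam_asym by blast

lemma tr1: "x \<in> carrier L \<Longrightarrow> y \<in> carrier L \<Longrightarrow> z \<in> carrier L \<Longrightarrow>
   (x \<sqsubseteq> y \<or> lam x y) \<Longrightarrow> (y \<sqsubseteq> z \<or> lam y z) \<Longrightarrow> (x \<sqsubseteq> z \<or> lam x z)"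
  using P7 by blast

lemma tr2: "x \<in> carrier L \<Longrightarrow> y \<in> carrier L \<Longrightarrow> z \<in> carrier L \<Longrightarrow>
   (x \<sqsubseteq> y \<or> lam y x) \<Longrightarrow> (y \<sqsubseteq> z \<or> lam z y) \<Longrightarrow> (x \<sqsubseteq> z \<or> lam z x)"
  using P8 by blast

lemma both: "(x \<sqsubseteq> y \<or> lam x y) \<Longrightarrow> (x \<sqsubseteq> y \<or> lam y x) \<Longrightarrow> x \<sqsubseteq> y"
  using lam_asym by metis

abbreviation B where "B \<equiv> left_boundary L lam"

lemma B_iff: "x \<in> B \<longleftrightarrow> x \<in> carrier L \<and> (\<forall>y\<in>carrier L. \<not> lam y x)"
  unfolding left_boundary_def by simp

lemma B_lam: "x \<in> B \<Longrightarrow> y \<in> carrier L \<Longrightarrow> \<not> x \<sqsubseteq> y \<Longrightarrow> \<not> y \<sqsubseteq> x \<Longrightarrow> lam x y"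
  using lam_total B_iff by metis

lemma B_le1: "x \<in> B \<Longrightarrow> y \<in> carrier L \<Longrightarrow> (y \<sqsubseteq> x \<or> lam y x) \<Longrightarrow> y \<sqsubseteq> x"
  using B_iff by metis

lemma B_chain: "x \<in> B \<Longrightarrow> y \<in> B \<Longrightarrow> x \<sqsubseteq> y \<or> y \<sqsubseteq> x"
  using B_lam B_iff by metis

lemma top_B: "\<top> \<in> B"
  unfolding B_iff using lam_inc top_closed top_higher by metis

lemma bot_B: "\<bottom> \<in> B"
  unfolding B_iff using lam_inc bottom_closed bottom_lower by metis

definition dn where "dn x = {w\<in>carrier L. w \<sqsubseteq> x}"
definition up where "up x = {w\<in>carrier L. x \<sqsubseteq> w}"

lemma dn_fin: "finite (dn x)" unfolding dn_def using fin by auto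
lemma up_fin: "finite (up x)" unfolding up_def using fin by auto

lemma dn_strict: "x \<in> carrier L \<Longrightarrow> y \<in> carrier L \<Longrightarrow> x \<sqsubseteq> y \<Longrightarrow> x \<noteq> y \<Longrightarrow> card (dn x) < card (dn y)"
proof -
  assume xy: "x \<in> carrier L" "y \<in> carrier L" "x \<sqsubseteq> y" "x \<noteq> y"
  have "dn x \<subset> dn y"
  proof
    show "dn x \<subseteq> dn y" unfolding dn_def using xy le_trans by auto
    have "y \<in> dn y" "y \<notin> dn x" unfolding dn_def using xy le_antisym by auto
    then show "dn x \<noteq> dn y" by auto
  qed
  then show ?thesis using dn_fin psubset_card_mono by metis
qed

lemma up_strict: "x \<in> carrier L \<Longrightarrow> y \<in> carrier L \<Longrightarrow> x \<sqsubseteq> y \<Longrightarrow> x \<noteq> y \<Longrightarrow> card (up y) < card (up x)"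
proof -
  assume xy: "x \<in> carrier L" "y \<in> carrier L" "x \<sqsubseteq> y" "x \<noteq> y"
  have "up y \<subset> up x"
  proof
    show "up y \<subseteq> up x" unfolding up_def using xy le_trans by auto
    have "x \<in> up x" "x \<notin> up y" unfolding up_def using xy le_antisym by auto
    then show "up y \<noteq> up x" by auto
  qed
  then show ?thesis using up_fin psubset_card_mono by metis
qed

lemma covers_iff: "covers L x y \<longleftrightarrow> x \<in> carrier L \<and> y \<in> carrier L \<and> x \<sqsubseteq> y \<and> x \<noteq> y \<and>
   (\<forall>z\<in>carrier L. x \<sqsubseteq> z \<longrightarrow> z \<sqsubseteq> y \<longrightarrow> z = x \<or> z = y)"
  unfolding covers_def lless_eq by auto

lemma coversI: "x \<in> carrier L \<Longrightarrow> y \<in> carrier L \<Longrightarrow> x \<sqsubseteq> y \<Longrightarrow> x \<noteq> y \<Longrightarrow>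
   (\<And>z. z \<in> carrier L \<Longrightarrow> x \<sqsubseteq> z \<Longrightarrow> z \<sqsubseteq> y \<Longrightarrow> z = x \<or> z = y) \<Longrightarrow> covers L x y"
  unfolding covers_iff by auto

lemma coversD: "covers L x y \<Longrightarrow> z \<in> carrier L \<Longrightarrow> x \<sqsubseteq> z \<Longrightarrow> z \<sqsubseteq> y \<Longrightarrow> z = x \<or> z = y"
  unfolding covers_iff by auto

lemma covers_carrier: "covers L x y \<Longrightarrow> x \<in> carrier L \<and> y \<in> carrier L"
  unfolding covers_iff by auto

lemma covers_le: "covers L x y \<Longrightarrow> x \<sqsubseteq> y \<and> x \<noteq> y"
  unfolding covers_iff by auto

lemma cover_below:
  assumes "x \<in> carrier L" "y \<in> carrier L" "x \<sqsubseteq> y" "x \<noteq> y"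
  shows "\<exists>p. covers L p y \<and> x \<sqsubseteq> p"
proof -
  let ?A = "{z\<in>carrier L. x \<sqsubseteq> z \<and> z \<sqsubseteq> y \<and> z \<noteq> y}"
  have fA: "finite ?A" using fin by simp
  have xA: "x \<in> ?A" using assms by simp
  have ne: "?A \<noteq> {}" using xA by auto
  obtain m where m: "m \<in> ?A" "\<forall>a\<in>?A. card (dn a) \<le> card (dn m)"
    using finite_max_nat[OF fA ne, of "\<lambda>a. card (dn a)"] by auto
  have mc: "m \<in> carrier L" "x \<sqsubseteq> m" "m \<sqsubseteq> y" "m \<noteq> y" using m(1) by simp_all
  have "covers L m y"
  proof (rule coversI)
    fix z assume z: "z \<in> carrier L" "m \<sqsubseteq> z" "z \<sqsubseteq> y"
    show "z = m \<or> z = y"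
    proof (rule ccontr)
      assume nz: "\<not> (z = m \<or> z = y)"
      have "x \<sqsubseteq> z" using le_trans[OF mc(2) z(2) assms(1) mc(1) z(1)] .
      then have "z \<in> ?A" using z nz by simp
      then have "card (dn z) \<le> card (dn m)" using m(2) by simp
      moreover have "card (dn m) < card (dn z)" using dn_strict[of m z] z mc nz by auto
      ultimately show False by simp
    qed
  qed (use mc assms in simp_all)
  then show ?thesis using mc(2) by (intro exI[of _ m]) simp
qed

lemma cover_above:
  assumes "x \<in> carrier L" "y \<in> carrier L" "x \<sqsubseteq> y" "x \<noteq> y"
  shows "\<exists>u. covers L x u \<and> u \<sqsubseteq> y"
proof -
  let ?A = "{z\<in>carrier L. x \<sqsubseteq> z \<and> z \<sqsubseteq> y \<and> z \<noteq> x}"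
  have fA: "finite ?A" using fin by simp
  have yA: "y \<in> ?A" using assms by simp
  have ne: "?A \<noteq> {}" using yA by auto
  obtain m where m: "m \<in> ?A" "\<forall>a\<in>?A. card (dn m) \<le> card (dn a)"
    using finite_min_nat[OF fA ne, of "\<lambda>a. card (dn a)"] by auto
  have mc: "m \<in> carrier L" "x \<sqsubseteq> m" "m \<sqsubseteq> y" "m \<noteq> x" using m(1) by simp_all
  have "covers L x m"
  proof (rule coversI)
    fix z assume z: "z \<in> carrier L" "x \<sqsubseteq> z" "z \<sqsubseteq> m"
    show "z = x \<or> z = m"
    proof (rule ccontr)
      assume nz: "\<not> (z = x \<or> z = m)"
      have "z \<sqsubseteq> y" using le_trans[OF z(3) mc(3) z(1) mc(1) assms(2)] .
      then have "z \<in> ?A" using z nz by simp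
      then have "card (dn m) \<le> card (dn z)" using m(2) by simp
      moreover have "card (dn z) < card (dn m)" using dn_strict[of z m] z mc nz by auto
      ultimately show False by simp
    qed
  qed (use mc assms in simp_all)
  then show ?thesis using mc(3) by (intro exI[of _ m]) simp
qed

lemma covers_lower_inc: "covers L p x \<Longrightarrow> covers L q x \<Longrightarrow> p \<noteq> q \<Longrightarrow> \<not> p \<sqsubseteq> q"
  unfolding covers_iff by metis

lemma covers_upper_inc: "covers L x p \<Longrightarrow> covers L x q \<Longrightarrow> p \<noteq> q \<Longrightarrow> \<not> p \<sqsubseteq> q"
  unfolding covers_iff by (metis le_trans)

lemma covers_join: "covers L p x \<Longrightarrow> covers L q x \<Longrightarrow> p \<noteq> q \<Longrightarrow> p \<squnion> q = x"
proof -
  assume a: "covers L p x" "covers L q x" "p \<noteq> q"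
  have c: "p \<in> carrier L" "q \<in> carrier L" "x \<in> carrier L" using a covers_carrier by auto
  have j: "p \<squnion> q \<sqsubseteq> x" using a c join_le covers_le by auto
  have pj: "p \<sqsubseteq> p \<squnion> q" using c join_left by auto
  have "q \<sqsubseteq> p \<squnion> q" using c join_right by auto
  then have "p \<squnion> q \<noteq> p" using covers_lower_inc[OF a(2) a(1)] a(3) by auto
  then show ?thesis using coversD[OF a(1) _ pj j] c by auto
qed

lemma covers_meet: "covers L x p \<Longrightarrow> covers L x q \<Longrightarrow> p \<noteq> q \<Longrightarrow> p \<sqinter> q = x"
proof -
  assume a: "covers L x p" "covers L x q" "p \<noteq> q"
  have c: "p \<in> carrier L" "q \<in> carrier L" "x \<in> carrier L" using a covers_carrier by auto
  have j: "x \<sqsubseteq> p \<sqinter> q" using a c meet_le covers_le by auto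
  have pj: "p \<sqinter> q \<sqsubseteq> p" using c meet_left by auto
  have "p \<sqinter> q \<sqsubseteq> q" using c meet_right by auto
  then have "p \<sqinter> q \<noteq> p" using covers_upper_inc[OF a(1) a(2)] a(3) by auto
  then show ?thesis using coversD[OF a(1) _ j pj] c by auto
qed


lemma B_lower:
  assumes xB: "x \<in> B" and xb: "x \<noteq> \<bottom>"
  shows "\<exists>p\<in>B. covers L p x"
proof -
  have xc: "x \<in> carrier L" using xB B_iff by simp
  let ?P = "{p. covers L p x}"
  have fP: "finite ?P" using covers_carrier by (intro finite_subset[OF _ fin]) auto
  obtain p0 where "covers L p0 x" using cover_below[of "\<bottom>" x] xc xb by auto
  then have neP: "?P \<noteq> {}" by auto
  have "\<exists>m\<in>?P. \<forall>a\<in>?P. m \<sqsubseteq> a \<or> lam m a"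
  proof (rule finite_total_min[OF fP neP])
    fix a b assume "a \<in> ?P" "b \<in> ?P"
    then have ab: "a \<in> carrier L" "b \<in> carrier L" using covers_carrier by auto
    show "(a \<sqsubseteq> b \<or> lam a b) \<or> (b \<sqsubseteq> a \<or> lam b a)"
    proof (cases "a \<sqsubseteq> b \<or> b \<sqsubseteq> a")
      case False then show ?thesis using lam_total[OF ab] by simp
    qed auto
  next
    fix a b d assume abd: "a \<in> ?P" "b \<in> ?P" "d \<in> ?P" and r: "a \<sqsubseteq> b \<or> lam a b" "b \<sqsubseteq> d \<or> lam b d"
    have "a \<in> carrier L" "b \<in> carrier L" "d \<in> carrier L" using abd covers_carrier by auto
    then show "a \<sqsubseteq> d \<or> lam a d" using tr1[OF _ _ _ r(1) r(2)] by simp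
  qed
  then obtain p where pP: "covers L p x" and pmin: "\<forall>a\<in>?P. p \<sqsubseteq> a \<or> lam p a" by auto
  have pc: "p \<in> carrier L" and px: "p \<sqsubseteq> x" using pP covers_carrier covers_le by auto
  have "p \<in> B"
    unfolding B_iff
  proof (intro conjI ballI notI)
    show "p \<in> carrier L" by (rule pc)
  next
    fix y assume yc: "y \<in> carrier L" and lyp: "lam y p"
    have i1: "\<not> y \<sqsubseteq> p" "\<not> p \<sqsubseteq> y" using lam_inc[OF lyp] by auto
    have "y \<sqsubseteq> x \<or> lam y x" using tr1[OF yc pc xc] lyp px by auto
    then have yx: "y \<sqsubseteq> x" using B_le1[OF xB yc] by simp
    have "y \<noteq> x" using i1(2) px by auto
    then obtain q where qx: "covers L q x" and yq: "y \<sqsubseteq> q" using cover_below[OF yc xc yx] by auto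
    have qc: "q \<in> carrier L" using qx covers_carrier by auto
    have "q \<noteq> p" using yq i1 by auto
    then have npq: "\<not> p \<sqsubseteq> q" using covers_lower_inc[OF pP qx] by simp
    then have lpq: "lam p q" using pmin qx by auto
    have "y \<sqsubseteq> p \<or> lam p y" using tr2[OF yc qc pc] yq lpq by auto
    then show False using i1 lam_asym lyp by auto
  qed
  then show ?thesis using pP by auto
qed

lemma leftmost_B:
  assumes pB: "p \<in> B" and pu: "covers L p u"
    and lm: "\<And>v. covers L p v \<Longrightarrow> v \<noteq> u \<Longrightarrow> lam u v"
  shows "u \<in> B"
  unfolding B_iff
proof (intro conjI ballI notI)
  have pc: "p \<in> carrier L" using pB B_iff by simp
  show uc: "u \<in> carrier L" using pu covers_carrier by auto
  have pule: "p \<sqsubseteq> u" using pu covers_le by auto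
  fix y assume yc: "y \<in> carrier L" and lyu: "lam y u"
  have i1: "\<not> y \<sqsubseteq> u" "\<not> u \<sqsubseteq> y" using lam_inc[OF lyu] by auto
  show False
  proof (cases "y \<sqsubseteq> p")
    case True
    then have "y \<sqsubseteq> u" using le_trans[OF True pule yc pc uc] by simp
    then show False using i1 by simp
  next
    case nyp: False
    show False
    proof (cases "p \<sqsubseteq> y")
      case True
      have "p \<noteq> y" using nyp pc by auto
      then obtain w where pw: "covers L p w" and wy: "w \<sqsubseteq> y" using cover_above[OF pc yc True] by auto
      have wc: "w \<in> carrier L" using pw covers_carrier by auto
      have "w \<noteq> u" using wy i1 by auto
      then have "lam u w" using lm pw by auto
      then have "u \<sqsubseteq> y \<or> lam u y" using tr1[OF uc wc yc] wy by auto
      then show False using i1 lam_asym lyu by auto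
    next
      case False
      then have "lam p y" using B_lam[OF pB yc] nyp by auto
      then have "y \<sqsubseteq> u \<or> lam u y" using tr2[OF yc pc uc] pule by auto
      then show False using i1 lam_asym lyu by auto
    qed
  qed
qed

lemma chain_join_irr:
  assumes xc: "x \<in> carrier L" and xb: "x \<noteq> \<bottom>"
    and ch: "\<And>a b. a \<in> dn x \<Longrightarrow> b \<in> dn x \<Longrightarrow> a \<sqsubseteq> b \<or> b \<sqsubseteq> a"
  shows "join_irreducible L x"
  unfolding join_irreducible_def
proof (intro conjI ballI impI xc xb)
  fix y z assume yc: "y \<in> carrier L" and zc: "z \<in> carrier L" and x: "x = y \<squnion> z"
  have "y \<in> dn x" "z \<in> dn x" unfolding dn_def x using yc zc join_left join_right by auto
  then have "y \<sqsubseteq> z \<or> z \<sqsubseteq> y" using ch by auto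
  then show "x = y \<or> x = z"
  proof
    assume "y \<sqsubseteq> z" then have "y \<squnion> z = z" using le_iff_meet yc zc by simp
    then show ?thesis using x by simp
  next
    assume "z \<sqsubseteq> y" then have "z \<squnion> y = y" using le_iff_meet yc zc by simp
    then show ?thesis using x join_comm by metis
  qed
qed

lemma join_irr_lower:
  assumes j: "join_irreducible L x"
  shows "\<exists>p. covers L p x \<and> (\<forall>w\<in>carrier L. w \<sqsubseteq> x \<longrightarrow> w \<noteq> x \<longrightarrow> w \<sqsubseteq> p)"
proof -
  have xc: "x \<in> carrier L" and xb: "x \<noteq> \<bottom>" using j unfolding join_irreducible_def by auto
  obtain p where px: "covers L p x" using cover_below[of "\<bottom>" x] xc xb by auto
  have "\<forall>w\<in>carrier L. w \<sqsubseteq> x \<longrightarrow> w \<noteq> x \<longrightarrow> w \<sqsubseteq> p"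
  proof (intro ballI impI)
    fix w assume wc: "w \<in> carrier L" and wx: "w \<sqsubseteq> x" "w \<noteq> x"
    obtain q where qx: "covers L q x" and wq: "w \<sqsubseteq> q" using cover_below[OF wc xc wx] by auto
    have "q = p"
    proof (rule ccontr)
      assume "q \<noteq> p"
      then have "p \<squnion> q = x" using covers_join[OF px qx] by auto
      then have "x = p \<or> x = q" using j px qx covers_carrier unfolding join_irreducible_def by metis
      then show False using px qx covers_le by auto
    qed
    then show "w \<sqsubseteq> p" using wq by simp
  qed
  then show ?thesis using px by auto
qed


lemma covers_up_fin: "finite {y. covers L x y}"
  using covers_carrier by (intro finite_subset[OF _ fin]) auto

lemma covers_dn_fin: "finite {y. covers L y x}"
  using covers_carrier by (intro finite_subset[OF _ fin]) auto

lemma two_upper: "\<not> card {y. covers L x y} \<le> 1 \<Longrightarrow> covers L x u \<Longrightarrow> \<exists>v. covers L x v \<and> v \<noteq> u"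
proof -
  assume a: "\<not> card {y. covers L x y} \<le> 1" "covers L x u"
  have "\<not> (\<forall>a\<in>{y. covers L x y}. \<forall>b\<in>{y. covers L x y}. a = b)"
    using a(1) card_le_Suc0_iff_eq[OF covers_up_fin] by simp
  then obtain v w where "covers L x v" "covers L x w" "v \<noteq> w" by auto
  then show ?thesis using a(2) by metis
qed

lemma one_lower: "(\<And>p q. covers L p x \<Longrightarrow> covers L q x \<Longrightarrow> p = q) \<Longrightarrow> card {y. covers L y x} \<le> 1"
  using card_le_Suc0_iff_eq[OF covers_dn_fin] by auto

lemma two_lower: "card {y. covers L y x} \<le> 1 \<Longrightarrow> covers L p x \<Longrightarrow> covers L q x \<Longrightarrow> p = q"
  using card_le_Suc0_iff_eq[OF covers_dn_fin] by auto

end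

locale cl = pd +
  fixes c
  assumes slim: "slim L" and smod: "semimodular L" and cl: "is_cl L lam c" and coat: "coatom L c"
begin

lemma cB: "c \<in> B" using cl unfolding is_cl_def by simp
lemma cc: "c \<in> carrier L" using cB B_iff by simp
lemma c_di: "doubly_irreducible L c" using cl unfolding is_cl_def by simp
lemma c_min: "d \<in> B \<Longrightarrow> doubly_irreducible L d \<Longrightarrow> c \<sqsubseteq> d" using cl unfolding is_cl_def by simp
lemma c_cov: "covers L c \<top>" using coat unfolding coatom_def by simp

lemma smodD: "a \<in> carrier L \<Longrightarrow> b \<in> carrier L \<Longrightarrow> covers L (a \<sqinter> b) a \<Longrightarrow> covers L b (a \<squnion> b)"
  using smod unfolding semimodular_def by simp

lemma down_chain_aux:
  "x \<in> B \<Longrightarrow> x \<sqsubseteq> c \<Longrightarrow> a \<in> dn x \<Longrightarrow> b \<in> dn x \<Longrightarrow> a \<sqsubseteq> b \<or> b \<sqsubseteq> a"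
proof (induction "card (dn x)" arbitrary: x a b rule: less_induct)
  case less
  have xc: "x \<in> carrier L" using less.prems(1) B_iff by simp
  have ac: "a \<in> carrier L" "a \<sqsubseteq> x" using less.prems(3) unfolding dn_def by simp_all
  have bc: "b \<in> carrier L" "b \<sqsubseteq> x" using less.prems(4) unfolding dn_def by simp_all
  show ?case
  proof (cases "x = \<bottom>")
    case True
    then have "a = \<bottom>" "b = \<bottom>" using ac bc le_antisym bottom_lower bottom_closed by metis+
    then show ?thesis by simp
  next
    case xnb: False
    obtain p where pB: "p \<in> B" and px: "covers L p x" using B_lower[OF less.prems(1) xnb] by auto
    have pc: "p \<in> carrier L" and pxle: "p \<sqsubseteq> x" "p \<noteq> x" using px covers_carrier covers_le by auto
    have pcle: "p \<sqsubseteq> c" using le_trans[OF pxle(1) less.prems(2) pc xc cc] .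
    have lt: "card (dn p) < card (dn x)" using dn_strict[OF pc xc pxle] .
    have IH: "\<And>a b. a \<in> dn p \<Longrightarrow> b \<in> dn p \<Longrightarrow> a \<sqsubseteq> b \<or> b \<sqsubseteq> a"
      using less.hyps[OF lt pB pcle] by simp
    show ?thesis
    proof (cases "\<exists>q. covers L q x \<and> q \<noteq> p")
      case False
      have sub: "\<And>w. w \<in> dn x \<Longrightarrow> w \<noteq> x \<Longrightarrow> w \<in> dn p"
      proof -
        fix w assume w: "w \<in> dn x" "w \<noteq> x"
        have wc: "w \<in> carrier L" "w \<sqsubseteq> x" using w unfolding dn_def by simp_all
        obtain q where "covers L q x" "w \<sqsubseteq> q" using cover_below[OF wc(1) xc wc(2) w(2)] by auto
        then have "w \<sqsubseteq> p" using False by auto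
        then show "w \<in> dn p" unfolding dn_def using wc by simp
      qed
      show ?thesis
      proof (cases "a = x \<or> b = x")
        case True then show ?thesis using ac bc by auto
      next
        case False then show ?thesis using IH sub less.prems(3,4) by simp
      qed
    next
      case True
      then obtain q where qx: "covers L q x" and qp: "q \<noteq> p" by auto
      have qc: "q \<in> carrier L" and qxle: "q \<sqsubseteq> x" using qx covers_carrier covers_le by auto
      have xnc: "x \<noteq> c"
      proof
        assume "x = c"
        then have "card {y. covers L y x} \<le> 1" using c_di unfolding doubly_irreducible_def by simp
        then show False using two_lower px qx qp by metis
      qed
      have pnc: "p \<noteq> c" using pxle less.prems(2) le_antisym pc xc by metis
      have pndi: "\<not> doubly_irreducible L p"
      proof
        assume "doubly_irreducible L p"
        then have "c \<sqsubseteq> p" using c_min pB by simp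
        then show False using pcle pnc le_antisym pc cc by metis
      qed
      have "card {y. covers L y p} \<le> 1"
      proof (rule one_lower)
        fix r1 r2 assume r: "covers L r1 p" "covers L r2 p"
        have "r1 \<in> dn p" "r2 \<in> dn p" using r covers_carrier covers_le unfolding dn_def by auto
        then have "r1 \<sqsubseteq> r2 \<or> r2 \<sqsubseteq> r1" using IH by simp
        then show "r1 = r2" using covers_lower_inc r by metis
      qed
      then have "\<not> card {y. covers L p y} \<le> 1" using pndi pc unfolding doubly_irreducible_def by simp
      then obtain u where pu: "covers L p u" and ux: "u \<noteq> x" using two_upper px by metis
      have uc: "u \<in> carrier L" and pule: "p \<sqsubseteq> u" using pu covers_carrier covers_le by auto
      have npq: "\<not> p \<sqsubseteq> q" "\<not> q \<sqsubseteq> p" using covers_lower_inc px qx qp by metis+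
      have lpq: "lam p q" using B_lam[OF pB qc npq] .
      have nxu: "\<not> x \<sqsubseteq> u" "\<not> u \<sqsubseteq> x" using covers_upper_inc px pu ux by metis+
      have lxu: "lam x u" using B_lam[OF less.prems(1) uc nxu] .
      have h1: "q \<sqsubseteq> u \<or> lam q u" using tr1[OF qc xc uc] qxle lxu by simp
      have h2: "q \<sqsubseteq> u \<or> lam u q" using tr2[OF qc pc uc] lpq pule by simp
      have qu: "q \<sqsubseteq> u" using both[OF h1 h2] .
      have "x \<sqsubseteq> u" using covers_join[OF px qx qp[symmetric]] join_le[OF pule qu pc qc uc] by simp
      then show ?thesis using nxu by simp
    qed
  qed
qed

definition D where "D = down_set L c"
definition S where "S = carrier L - D"

lemma D_dn: "D = dn c" unfolding D_def down_set_def dn_def by simp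

lemma D_chain: "a \<in> D \<Longrightarrow> b \<in> D \<Longrightarrow> a \<sqsubseteq> b \<or> b \<sqsubseteq> a"
  unfolding D_dn using down_chain_aux[OF cB] cc by simp

lemma D_mem: "a \<in> D \<longleftrightarrow> a \<in> carrier L \<and> a \<sqsubseteq> c" unfolding D_dn dn_def by simp

lemma S_mem: "a \<in> S \<longleftrightarrow> a \<in> carrier L \<and> \<not> a \<sqsubseteq> c" by (auto simp: S_def D_mem)

lemma D_B: "D \<subseteq> B"
proof
  fix x assume xD: "x \<in> D"
  have xc: "x \<in> carrier L" and xle: "x \<sqsubseteq> c" using xD D_mem by auto
  show "x \<in> B" unfolding B_iff
  proof (intro conjI ballI notI xc)
    fix y assume yc: "y \<in> carrier L" and lyx: "lam y x"
    have "y \<sqsubseteq> c \<or> lam y c" using tr1[OF yc xc cc] lyx xle by simp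
    then have "y \<sqsubseteq> c" using B_le1[OF cB yc] by simp
    then have "y \<in> D" using D_mem yc by simp
    then have "y \<sqsubseteq> x \<or> x \<sqsubseteq> y" using D_chain xD by simp
    then show False using lam_inc[OF lyx] by simp
  qed
qed

lemma S_up: "x \<in> S \<Longrightarrow> z \<in> carrier L \<Longrightarrow> x \<sqsubseteq> z \<Longrightarrow> z \<in> S"
  unfolding S_mem using le_trans cc by metis

lemma top_S: "\<top> \<in> S"
  unfolding S_mem using c_cov covers_le top_closed le_antisym cc by metis

lemma bot_D: "\<bottom> \<in> D"
  unfolding D_mem using cc by simp

lemma S_top: "z \<in> S \<Longrightarrow> z \<noteq> \<top> \<Longrightarrow> \<not> c \<sqsubseteq> z"
proof
  assume z: "z \<in> S" "z \<noteq> \<top>" "c \<sqsubseteq> z"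
  have zc: "z \<in> carrier L" and nzc: "\<not> z \<sqsubseteq> c" using z S_mem by auto
  have "z = c \<or> z = \<top>" using coversD[OF c_cov zc z(3)] top_higher zc by simp
  then show False using z nzc cc by auto
qed

definition minS where "minS m \<longleftrightarrow> m \<in> S \<and> (\<forall>w\<in>S. w \<sqsubseteq> m \<longrightarrow> w = m)"

lemma ex_minS: "z \<in> S \<Longrightarrow> \<exists>m. minS m \<and> m \<sqsubseteq> z"
proof -
  assume zS: "z \<in> S"
  have zc: "z \<in> carrier L" using zS S_mem by simp
  let ?A = "{w\<in>S. w \<sqsubseteq> z}"
  have fA: "finite ?A" using fin S_def by simp
  have neA: "?A \<noteq> {}" using zS zc by auto
  obtain m where m: "m \<in> ?A" "\<forall>a\<in>?A. card (dn m) \<le> card (dn a)"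
    using finite_min_nat[OF fA neA, of "\<lambda>a. card (dn a)"] by auto
  have mS: "m \<in> S" and mz: "m \<sqsubseteq> z" using m(1) by simp_all
  have mc: "m \<in> carrier L" using mS S_mem by simp
  have "minS m" unfolding minS_def
  proof (intro conjI ballI impI mS)
    fix w assume wS: "w \<in> S" and wm: "w \<sqsubseteq> m"
    have wc: "w \<in> carrier L" using wS S_mem by simp
    show "w = m"
    proof (rule ccontr)
      assume "w \<noteq> m"
      then have lt: "card (dn w) < card (dn m)" using dn_strict[OF wc mc wm] by simp
      have "w \<sqsubseteq> z" using le_trans[OF wm mz wc mc zc] .
      then have "w \<in> ?A" using wS by simp
      then show False using m(2) lt by fastforce
    qed
  qed
  then show ?thesis using mz by auto
qed

lemma minS_JI: "minS m \<Longrightarrow> join_irreducible L m"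
proof -
  assume mm: "minS m"
  have mS: "m \<in> S" using mm minS_def by simp
  have mc: "m \<in> carrier L" using mS S_mem by simp
  have mb: "m \<noteq> \<bottom>" using mS bot_D S_def by auto
  show ?thesis
  proof (rule chain_join_irr[OF mc mb])
    fix a b assume a: "a \<in> dn m" and b: "b \<in> dn m"
    have ac: "a \<in> carrier L" "a \<sqsubseteq> m" and bc: "b \<in> carrier L" "b \<sqsubseteq> m" using a b dn_def by auto
    show "a \<sqsubseteq> b \<or> b \<sqsubseteq> a"
    proof (cases "a = m \<or> b = m")
      case True then show ?thesis using ac bc by auto
    next
      case False
      then have "a \<notin> S" "b \<notin> S" using mm ac bc unfolding minS_def by auto
      then have "a \<in> D" "b \<in> D" using ac bc S_def by auto
      then show ?thesis using D_chain by simp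
    qed
  qed
qed

lemma c_JI: "c \<noteq> \<bottom> \<Longrightarrow> join_irreducible L c"
  using chain_join_irr[OF cc] D_chain D_dn by simp

lemma minS_unique: "minS m1 \<Longrightarrow> minS m2 \<Longrightarrow> m1 = m2"
proof (rule ccontr)
  assume m: "minS m1" "minS m2" "m1 \<noteq> m2"
  have mS: "m1 \<in> S" "m2 \<in> S" using m minS_def by auto
  have mc: "m1 \<in> carrier L" "m2 \<in> carrier L" using mS S_mem by auto
  have i12: "\<not> m1 \<sqsubseteq> m2" "\<not> m2 \<sqsubseteq> m1" using m mS unfolding minS_def by auto
  have nt: "m1 \<noteq> \<top>" "m2 \<noteq> \<top>" using i12 mc top_higher by auto
  have i1c: "\<not> c \<sqsubseteq> m1" "\<not> m1 \<sqsubseteq> c" using S_top[OF mS(1) nt(1)] mS S_mem by auto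
  have i2c: "\<not> c \<sqsubseteq> m2" "\<not> m2 \<sqsubseteq> c" using S_top[OF mS(2) nt(2)] mS S_mem by auto
  have cb: "c \<noteq> \<bottom>" using i1c mc bottom_lower by auto
  have "join_irreducible L m1" "join_irreducible L m2" "join_irreducible L c"
    using minS_JI m c_JI cb by auto
  moreover have "incomparable L m1 m2" "incomparable L m2 c" "incomparable L m1 c"
    unfolding incomparable_def using i12 i1c i2c by auto
  ultimately show False using slim unfolding slim_def by blast
qed

definition e where "e = (THE m. minS m)"

lemma e_min: "minS e"
proof -
  obtain m where "minS m" using ex_minS top_S by auto
  then show ?thesis unfolding e_def using minS_unique by (metis theI)
qed

lemma e_le: "z \<in> S \<Longrightarrow> e \<sqsubseteq> z"
  using ex_minS minS_unique e_min by metis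

lemma eS: "e \<in> S" using e_min minS_def by simp

lemma S_meet: "x \<in> S \<Longrightarrow> y \<in> S \<Longrightarrow> x \<sqinter> y \<in> S"
proof -
  assume xy: "x \<in> S" "y \<in> S"
  have c: "x \<in> carrier L" "y \<in> carrier L" "e \<in> carrier L" using xy eS S_mem by auto
  have "e \<sqsubseteq> x \<sqinter> y" using meet_le[OF e_le[OF xy(1)] e_le[OF xy(2)] c(1) c(2) c(3)] .
  then show ?thesis using S_up[OF eS] c by simp
qed

lemma S_join: "x \<in> S \<Longrightarrow> y \<in> S \<Longrightarrow> x \<squnion> y \<in> S"
proof -
  assume xy: "x \<in> S" "y \<in> S"
  have c: "x \<in> carrier L" "y \<in> carrier L" using xy S_mem by auto
  show ?thesis using S_up[OF xy(1)] join_left[OF c] c by simp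
qed

lemma S_sub: "S \<subseteq> carrier L" unfolding S_def by auto

lemma sublat: "sublattice L S"
  unfolding sublattice_def using S_sub top_S S_meet S_join by auto


abbreviation LS where "LS \<equiv> induced_order L S"
abbreviation lamS where "lamS \<equiv> induced_left lam S"

lemma LS_carrier [simp]: "carrier LS = S" unfolding induced_order_def by simp
lemma LS_le [simp]: "le LS = le L" unfolding induced_order_def by simp
lemma LS_eq [simp]: "eq LS = eq L" unfolding induced_order_def by simp

lemma LS_po: "partial_order LS"
proof -
  have e: "eq L = (=)" using eq_is_equal by simp
  show ?thesis
  proof (unfold_locales, simp_all only: LS_carrier LS_le LS_eq e)
    fix x y z assume "x \<in> S" "y \<in> S" "z \<in> S" "x \<sqsubseteq> y" "y \<sqsubseteq> z"
    then show "x \<sqsubseteq> z" using le_trans S_sub by (meson subsetD)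
  next
    fix x y assume "x \<in> S" "y \<in> S" "x \<sqsubseteq> y" "y \<sqsubseteq> x"
    then show "x = y" using le_antisym S_sub by (meson subsetD)
  next
    fix x assume "x \<in> S" then show "x \<sqsubseteq> x" using S_sub by auto
  qed
qed

lemma LS_sup_least: "x \<in> S \<Longrightarrow> y \<in> S \<Longrightarrow> least LS (x \<squnion> y) (Upper LS {x, y})"
proof -
  assume xy: "x \<in> S" "y \<in> S"
  have c: "x \<in> carrier L" "y \<in> carrier L" using xy S_sub by auto
  have jS: "x \<squnion> y \<in> S" using S_join xy by simp
  show ?thesis unfolding least_def Upper_def
    using jS xy join_left[OF c] join_right[OF c] join_le c S_sub by (auto simp: subset_iff)
qed

lemma LS_inf_greatest: "x \<in> S \<Longrightarrow> y \<in> S \<Longrightarrow> greatest LS (x \<sqinter> y) (Lower LS {x, y})"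
proof -
  assume xy: "x \<in> S" "y \<in> S"
  have c: "x \<in> carrier L" "y \<in> carrier L" using xy S_sub by auto
  have jS: "x \<sqinter> y \<in> S" using S_meet xy by simp
  show ?thesis unfolding greatest_def Lower_def
    using jS xy meet_left[OF c] meet_right[OF c] meet_le c S_sub by (auto simp: subset_iff)
qed

lemma LS_lattice: "lattice LS"
proof -
  interpret P: partial_order LS by (rule LS_po)
  show ?thesis
  proof (unfold_locales)
    fix x y assume "x \<in> carrier LS" "y \<in> carrier LS"
    then show "\<exists>s. least LS s (Upper LS {x, y})" using LS_sup_least by auto
  next
    fix x y assume "x \<in> carrier LS" "y \<in> carrier LS"
    then show "\<exists>s. greatest LS s (Lower LS {x, y})" using LS_inf_greatest by auto
  qed
qed

lemma LS_join: "x \<in> S \<Longrightarrow> y \<in> S \<Longrightarrow> x \<squnion>\<^bsub>LS\<^esub> y = x \<squnion> y"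
proof -
  assume xy: "x \<in> S" "y \<in> S"
  interpret P: lattice LS by (rule LS_lattice)
  have "least LS (x \<squnion>\<^bsub>LS\<^esub> y) (Upper LS {x, y})"
    using P.sup_of_two_least xy unfolding join_def by simp
  then show ?thesis using P.least_unique LS_sup_least[OF xy] by metis
qed

lemma LS_meet: "x \<in> S \<Longrightarrow> y \<in> S \<Longrightarrow> x \<sqinter>\<^bsub>LS\<^esub> y = x \<sqinter> y"
proof -
  assume xy: "x \<in> S" "y \<in> S"
  interpret P: lattice LS by (rule LS_lattice)
  have "greatest LS (x \<sqinter>\<^bsub>LS\<^esub> y) (Lower LS {x, y})"
    using P.inf_of_two_greatest xy unfolding meet_def by simp
  then show ?thesis using P.greatest_unique LS_inf_greatest[OF xy] by metis
qed

lemma lamS_iff: "lamS x y \<longleftrightarrow> lam x y \<and> x \<in> S \<and> y \<in> S"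
  unfolding induced_left_def by simp

lemma inc_S: "incomparable LS x y \<longleftrightarrow> incomparable L x y"
  unfolding incomparable_def by simp

lemma pdS: "planar_diagram LS lamS"
  unfolding planar_diagram_def
proof (intro conjI)
  show "lattice LS" by (rule LS_lattice)
  show "finite (carrier LS)" using fin S_sub finite_subset by simp
  show "carrier LS \<noteq> {}" using top_S by auto
  show "\<forall>x y. lamS x y \<longrightarrow> x \<in> carrier LS \<and> y \<in> carrier LS \<and> incomparable LS x y"
    using lamS_iff inc_S P4 by simp
  show "\<forall>x\<in>carrier LS. \<forall>y\<in>carrier LS. incomparable LS x y \<longrightarrow> lamS x y \<or> lamS y x"
    using lamS_iff inc_S P5 S_sub by (auto simp: subset_iff)
  show "\<forall>x y. \<not> (lamS x y \<and> lamS y x)" using lamS_iff P6 by simp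
  show "\<forall>x\<in>carrier LS. \<forall>y\<in>carrier LS. \<forall>z\<in>carrier LS.
        (x \<sqsubseteq>\<^bsub>LS\<^esub> y \<or> lamS x y) \<longrightarrow> (y \<sqsubseteq>\<^bsub>LS\<^esub> z \<or> lamS y z) \<longrightarrow> (x \<sqsubseteq>\<^bsub>LS\<^esub> z \<or> lamS x z)"
  proof (intro ballI impI)
    fix x y z assume xyz: "x \<in> carrier LS" "y \<in> carrier LS" "z \<in> carrier LS"
      and r: "x \<sqsubseteq>\<^bsub>LS\<^esub> y \<or> lamS x y" "y \<sqsubseteq>\<^bsub>LS\<^esub> z \<or> lamS y z"
    have c: "x \<in> carrier L" "y \<in> carrier L" "z \<in> carrier L" using xyz S_sub by auto
    have r': "x \<sqsubseteq> y \<or> lam x y" "y \<sqsubseteq> z \<or> lam y z" using r lamS_iff by auto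
    show "x \<sqsubseteq>\<^bsub>LS\<^esub> z \<or> lamS x z" using tr1[OF c r'] lamS_iff xyz by auto
  qed
  show "\<forall>x\<in>carrier LS. \<forall>y\<in>carrier LS. \<forall>z\<in>carrier LS.
        (x \<sqsubseteq>\<^bsub>LS\<^esub> y \<or> lamS y x) \<longrightarrow> (y \<sqsubseteq>\<^bsub>LS\<^esub> z \<or> lamS z y) \<longrightarrow> (x \<sqsubseteq>\<^bsub>LS\<^esub> z \<or> lamS z x)"
  proof (intro ballI impI)
    fix x y z assume xyz: "x \<in> carrier LS" "y \<in> carrier LS" "z \<in> carrier LS"
      and r: "x \<sqsubseteq>\<^bsub>LS\<^esub> y \<or> lamS y x" "y \<sqsubseteq>\<^bsub>LS\<^esub> z \<or> lamS z y"
    have c: "x \<in> carrier L" "y \<in> carrier L" "z \<in> carrier L" using xyz S_sub by auto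
    have r': "x \<sqsubseteq> y \<or> lam y x" "y \<sqsubseteq> z \<or> lam z y" using r lamS_iff by auto
    show "x \<sqsubseteq>\<^bsub>LS\<^esub> z \<or> lamS z x" using tr2[OF c r'] lamS_iff xyz by auto
  qed
qed


sublocale E: pd LS lamS by (unfold_locales) (rule pdS)

lemma covers_S: "x \<in> S \<Longrightarrow> y \<in> S \<Longrightarrow> covers LS x y \<longleftrightarrow> covers L x y"
proof -
  assume xy: "x \<in> S" "y \<in> S"
  have "covers LS x y \<longleftrightarrow> x \<sqsubseteq> y \<and> x \<noteq> y \<and> (\<forall>z\<in>S. x \<sqsubseteq> z \<longrightarrow> z \<sqsubseteq> y \<longrightarrow> z = x \<or> z = y)"
    using E.covers_iff[of x y] xy by simp
  also have "\<dots> \<longleftrightarrow> x \<sqsubseteq> y \<and> x \<noteq> y \<and> (\<forall>z\<in>carrier L. x \<sqsubseteq> z \<longrightarrow> z \<sqsubseteq> y \<longrightarrow> z = x \<or> z = y)"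
    using S_up[OF xy(1)] S_sub by (auto simp: subset_iff)
  also have "\<dots> \<longleftrightarrow> covers L x y" using covers_iff[of x y] xy S_sub by (auto simp: subset_iff)
  finally show ?thesis .
qed

lemma covers_S': "covers LS x y \<longleftrightarrow> x \<in> S \<and> y \<in> S \<and> covers L x y"
proof
  assume a: "covers LS x y"
  have "x \<in> carrier LS \<and> y \<in> carrier LS" by (rule E.covers_carrier[OF a])
  then have xy: "x \<in> S" "y \<in> S" by simp_all
  show "x \<in> S \<and> y \<in> S \<and> covers L x y" using a covers_S[OF xy] xy by simp
next
  assume "x \<in> S \<and> y \<in> S \<and> covers L x y"
  then show "covers LS x y" using covers_S by simp
qed

lemma semimodS: "semimodular LS"
  unfolding semimodular_def
proof (intro ballI impI)
  fix a b assume ab: "a \<in> carrier LS" "b \<in> carrier LS" and cv: "covers LS (a \<sqinter>\<^bsub>LS\<^esub> b) a"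
  have aS: "a \<in> S" "b \<in> S" using ab by auto
  have c: "a \<in> carrier L" "b \<in> carrier L" using aS S_sub by auto
  have "covers L (a \<sqinter> b) a" using cv LS_meet[OF aS] covers_S' by simp
  then have "covers L b (a \<squnion> b)" using smodD[OF c] by simp
  then show "covers LS b (a \<squnion>\<^bsub>LS\<^esub> b)" using LS_join[OF aS] covers_S' aS S_join by simp
qed

lemma JI_S_S: "join_irreducible LS z \<Longrightarrow> z \<in> S"
proof -
  assume "join_irreducible LS z"
  then have "z \<in> carrier LS" unfolding join_irreducible_def by (elim conjE)
  then show "z \<in> S" by simp
qed

lemma JI_S_fix:
  assumes jz: "join_irreducible LS z" and wS: "w \<in> S" and izw: "incomparable L z w"
    and nj: "\<not> join_irreducible L z"
  shows "c \<sqinter> z \<in> D \<and> \<not> c \<sqinter> z \<sqsubseteq> w \<and> \<not> w \<sqsubseteq> c \<sqinter> z \<and> join_irreducible L (c \<sqinter> z)"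
proof -
  have zS: "z \<in> S" using JI_S_S[OF jz] .
  have zc: "z \<in> carrier L" and wc: "w \<in> carrier L" using zS wS S_sub by auto
  obtain p where pz: "covers LS p z" and plow: "\<forall>v\<in>carrier LS. v \<sqsubseteq>\<^bsub>LS\<^esub> z \<longrightarrow> v \<noteq> z \<longrightarrow> v \<sqsubseteq>\<^bsub>LS\<^esub> p"
    using E.join_irr_lower[OF jz] by auto
  have pS: "p \<in> S" and pzL: "covers L p z" using pz covers_S' by auto
  have pc: "p \<in> carrier L" using pS S_sub by auto
  have plow': "\<And>v. v \<in> S \<Longrightarrow> v \<sqsubseteq> z \<Longrightarrow> v \<noteq> z \<Longrightarrow> v \<sqsubseteq> p" using plow by simp
  have zb: "z \<noteq> \<bottom>" using zS bot_D S_def by auto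
  obtain a b where abc: "a \<in> carrier L" "b \<in> carrier L" and zab: "z = a \<squnion> b" and nza: "z \<noteq> a" "z \<noteq> b"
    using nj zc zb unfolding join_irreducible_def by auto
  let ?t = "c \<sqinter> z"
  have tc: "?t \<in> carrier L" using cc zc by simp
  have tle: "?t \<sqsubseteq> c" "?t \<sqsubseteq> z" using meet_left[OF cc zc] meet_right[OF cc zc] by auto
  have tD: "?t \<in> D" using D_mem tc tle by simp
  have ntw: "\<not> ?t \<sqsubseteq> w"
  proof
    assume tw: "?t \<sqsubseteq> w"
    have zwS: "z \<sqinter> w \<in> S" using S_meet zS wS by simp
    have zwc: "z \<sqinter> w \<in> carrier L" using zc wc by simp
    have zwz: "z \<sqinter> w \<sqsubseteq> z" using meet_left[OF zc wc] .
    have "z \<sqinter> w \<noteq> z" using meet_right[OF zc wc] izw unfolding incomparable_def by auto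
    then have zwp: "z \<sqinter> w \<sqsubseteq> p" using plow'[OF zwS zwz] by simp
    have "?t \<sqsubseteq> z \<sqinter> w" using meet_le[OF tle(2) tw zc wc tc] .
    then have tp: "?t \<sqsubseteq> p" using le_trans[OF _ zwp tc zwc pc] by simp
    have below: "\<And>v. v \<in> carrier L \<Longrightarrow> v \<sqsubseteq> z \<Longrightarrow> v \<noteq> z \<Longrightarrow> v \<sqsubseteq> p"
    proof -
      fix v assume v: "v \<in> carrier L" "v \<sqsubseteq> z" "v \<noteq> z"
      show "v \<sqsubseteq> p"
      proof (cases "v \<in> S")
        case True then show ?thesis using plow' v by simp
      next
        case False
        then have "v \<sqsubseteq> c" using v S_mem by simp
        then have "v \<sqsubseteq> ?t" using meet_le[OF _ v(2) cc zc v(1)] by simp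
        then show ?thesis using le_trans[OF _ tp v(1) tc pc] by simp
      qed
    qed
    have "a \<sqsubseteq> p" using below[OF abc(1)] join_left[OF abc] zab nza by simp
    moreover have "b \<sqsubseteq> p" using below[OF abc(2)] join_right[OF abc] zab nza by simp
    ultimately have "z \<sqsubseteq> p" using join_le[OF _ _ abc pc] zab by simp
    then show False using pzL covers_le le_antisym pc zc by metis
  qed
  have nwt: "\<not> w \<sqsubseteq> ?t" using wS S_mem le_trans[OF _ tle(1) wc tc cc] by auto
  have tb: "?t \<noteq> \<bottom>" using ntw wc bottom_lower by auto
  have jt: "join_irreducible L ?t"
  proof (rule chain_join_irr[OF tc tb])
    fix a b assume "a \<in> dn ?t" "b \<in> dn ?t"
    then have "a \<in> D" "b \<in> D" using D_mem le_trans[OF _ tle(1) _ tc cc] unfolding dn_def by auto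
    then show "a \<sqsubseteq> b \<or> b \<sqsubseteq> a" using D_chain by simp
  qed
  show ?thesis using tD ntw nwt jt by simp
qed

lemma slim_two:
  assumes j: "join_irreducible LS x" "join_irreducible LS y" and i: "incomparable L x y"
    and n: "\<not> join_irreducible L x" "\<not> join_irreducible L y"
  shows False
proof -
  have xyS: "x \<in> S" "y \<in> S" using j JI_S_S by auto
  have iyx: "incomparable L y x" using i unfolding incomparable_def by auto
  have A: "c \<sqinter> x \<in> D" "\<not> c \<sqinter> x \<sqsubseteq> y" using JI_S_fix[OF j(1) xyS(2) i n(1)] by auto
  have B': "c \<sqinter> y \<in> D" "\<not> c \<sqinter> y \<sqsubseteq> x" using JI_S_fix[OF j(2) xyS(1) iyx n(2)] by auto
  have c: "x \<in> carrier L" "y \<in> carrier L" using xyS S_sub by auto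
  have m: "c \<sqinter> x \<sqsubseteq> x" "c \<sqinter> y \<sqsubseteq> y" using meet_right cc c by auto
  have mc: "c \<sqinter> x \<in> carrier L" "c \<sqinter> y \<in> carrier L" using cc c by auto
  from D_chain[OF A(1) B'(1)] show False
  proof
    assume "c \<sqinter> x \<sqsubseteq> c \<sqinter> y"
    then have "c \<sqinter> x \<sqsubseteq> y" using le_trans[OF _ m(2) mc(1) mc(2) c(2)] by simp
    then show False using A by simp
  next
    assume "c \<sqinter> y \<sqsubseteq> c \<sqinter> x"
    then have "c \<sqinter> y \<sqsubseteq> x" using le_trans[OF _ m(1) mc(2) mc(1) c(1)] by simp
    then show False using B' by simp
  qed
qed

lemma slim_one:
  assumes j: "join_irreducible LS x" "join_irreducible LS y" "join_irreducible LS z"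
    and i: "incomparable L x y" "incomparable L y z" "incomparable L x z"
    and n: "\<not> join_irreducible L x" and jy: "join_irreducible L y" and jz: "join_irreducible L z"
  shows False
proof -
  have S: "x \<in> S" "y \<in> S" "z \<in> S" using j JI_S_S by auto
  have A: "c \<sqinter> x \<in> D" "\<not> c \<sqinter> x \<sqsubseteq> y" "\<not> y \<sqsubseteq> c \<sqinter> x" "join_irreducible L (c \<sqinter> x)"
    using JI_S_fix[OF j(1) S(2) i(1) n] by auto
  have B': "\<not> c \<sqinter> x \<sqsubseteq> z" "\<not> z \<sqsubseteq> c \<sqinter> x"
    using JI_S_fix[OF j(1) S(3) i(3) n] by auto
  have "incomparable L (c \<sqinter> x) y" "incomparable L y z" "incomparable L (c \<sqinter> x) z"
    unfolding incomparable_def using A B' i(2) unfolding incomparable_def by auto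
  then show False using slim A(4) jy jz unfolding slim_def by blast
qed

lemma slimS: "slim LS"
  unfolding slim_def
proof
  assume "\<exists>x y z. join_irreducible LS x \<and> join_irreducible LS y \<and> join_irreducible LS z \<and>
       incomparable LS x y \<and> incomparable LS y z \<and> incomparable LS x z"
  then obtain x y z where j: "join_irreducible LS x" "join_irreducible LS y" "join_irreducible LS z"
    and i: "incomparable L x y" "incomparable L y z" "incomparable L x z"
    using inc_S by auto
  have i': "incomparable L y x" "incomparable L z y" "incomparable L z x"
    using i unfolding incomparable_def by auto
  show False
  proof (cases "join_irreducible L x")
    case jx: True
    show False
    proof (cases "join_irreducible L y")
      case jy: True
      show False
      proof (cases "join_irreducible L z")
        case True
        then show False using slim jx jy i unfolding slim_def by blast
      next
        case False
        then show False using slim_one[OF j(3) j(1) j(2) i'(3) i(1) i'(2) False jx jy] by simp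
      qed
    next
      case ny: False
      show False
      proof (cases "join_irreducible L z")
        case True
        then show False using slim_one[OF j(2) j(1) j(3) i'(1) i(3) i(2) ny jx True] by simp
      next
        case False
        then show False using slim_two[OF j(2) j(3) i(2) ny False] by simp
      qed
    qed
  next
    case nx: False
    show False
    proof (cases "join_irreducible L y")
      case jy: True
      show False
      proof (cases "join_irreducible L z")
        case True
        then show False using slim_one[OF j(1) j(2) j(3) i nx jy True] by simp
      next
        case False
        then show False using slim_two[OF j(1) j(3) i(3) nx False] by simp
      qed
    next
      case False
      then show False using slim_two[OF j(1) j(2) i(1) nx False] by simp
    qed
  qed
qed

lemma ssdS: "slim_semimodular_diagram LS lamS"
  unfolding slim_semimodular_diagram_def using pdS slimS semimodS by simp


definition H where "H x = Max {card C | C. is_chain L C \<and> C \<subseteq> up x}"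

lemma chains_fin: "finite {card C | C. is_chain L C \<and> C \<subseteq> up x}"
proof -
  have "{C. is_chain L C \<and> C \<subseteq> up x} \<subseteq> Pow (carrier L)" unfolding is_chain_def by auto
  then have "finite {C. is_chain L C \<and> C \<subseteq> up x}" using fin finite_subset by blast
  then have "finite (card ` {C. is_chain L C \<and> C \<subseteq> up x})" by simp
  moreover have "{card C | C. is_chain L C \<and> C \<subseteq> up x} = card ` {C. is_chain L C \<and> C \<subseteq> up x}" by auto
  ultimately show ?thesis by simp
qed

lemma H_ge: "is_chain L C \<Longrightarrow> C \<subseteq> up x \<Longrightarrow> card C \<le> H x"
  unfolding H_def using chains_fin by (intro Max_ge) auto

lemma H_ex: "\<exists>C. is_chain L C \<and> C \<subseteq> up x \<and> card C = H x"
proof -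
  have "is_chain L {}" unfolding is_chain_def by simp
  then have ne: "{card C | C. is_chain L C \<and> C \<subseteq> up x} \<noteq> {}" by auto
  have "H x \<in> {card C | C. is_chain L C \<and> C \<subseteq> up x}" unfolding H_def using Max_in[OF chains_fin ne] .
  then show ?thesis by auto
qed

lemma chain_insert: "is_chain L C \<Longrightarrow> C \<subseteq> up b \<Longrightarrow> b \<in> carrier L \<Longrightarrow> is_chain L (insert b C) \<and> insert b C \<subseteq> up b"
  unfolding is_chain_def up_def by auto

lemma H_top: "H \<top> \<le> 1"
proof -
  obtain C where C: "is_chain L C" "C \<subseteq> up \<top>" "card C = H \<top>" using H_ex by blast
  have "up \<top> \<subseteq> {\<top>}" unfolding up_def using top_higher le_antisym top_closed by auto
  then have "C \<subseteq> {\<top>}" using C by simp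
  then have "card C \<le> 1" using card_mono[of "{\<top>}" C] by simp
  then show ?thesis using C by simp
qed

lemma H_cover: "covers L a b \<Longrightarrow> H a \<le> H b + 1"
proof (induction "card (up a)" arbitrary: a b rule: less_induct)
  case less
  have ac: "a \<in> carrier L" and bc: "b \<in> carrier L" and ab: "a \<sqsubseteq> b" "a \<noteq> b"
    using less.prems covers_carrier covers_le by auto
  obtain C where C: "is_chain L C" "C \<subseteq> up a" "card C = H a" using H_ex by blast
  have fC: "finite C" using C(1) fin finite_subset unfolding is_chain_def by metis
  have aC: "a \<in> C"
  proof (rule ccontr)
    assume "a \<notin> C"
    then have "card (insert a C) = card C + 1" using fC by simp
    moreover have "card (insert a C) \<le> H a" using chain_insert[OF C(1) C(2) ac] H_ge by metis
    ultimately show False using C(3) by simp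
  qed
  show ?case
  proof (cases "C - {a} = {}")
    case True
    then have "C = {a}" using aC by auto
    then show ?thesis using C(3) by simp
  next
    case False
    let ?C' = "C - {a}"
    have fC': "finite ?C'" using fC by simp
    have Cc: "\<And>w. w \<in> C \<Longrightarrow> w \<in> carrier L" using C(1) unfolding is_chain_def by auto
    obtain m where mC: "m \<in> ?C'" and mmin: "\<forall>w\<in>?C'. m \<sqsubseteq> w"
    proof -
      have "\<exists>m\<in>?C'. \<forall>w\<in>?C'. m \<sqsubseteq> w"
      proof (rule finite_total_min[OF fC' False])
        fix u v assume "u \<in> ?C'" "v \<in> ?C'" then show "u \<sqsubseteq> v \<or> v \<sqsubseteq> u" using C(1) unfolding is_chain_def by auto
      next
        fix u v w assume "u \<in> ?C'" "v \<in> ?C'" "w \<in> ?C'" "u \<sqsubseteq> v" "v \<sqsubseteq> w"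
        then show "u \<sqsubseteq> w" using le_trans Cc by (meson DiffD1)
      qed
      then show ?thesis using that by blast
    qed
    have mc: "m \<in> carrier L" using mC Cc by simp
    have am: "a \<sqsubseteq> m" "a \<noteq> m" using mC C(2) unfolding up_def by auto
    obtain a1 where aa1: "covers L a a1" and a1m: "a1 \<sqsubseteq> m" using cover_above[OF ac mc am] by auto
    have a1c: "a1 \<in> carrier L" using aa1 covers_carrier by auto
    have "?C' \<subseteq> up a1"
    proof
      fix w assume w: "w \<in> ?C'"
      have "a1 \<sqsubseteq> w" using le_trans[OF a1m _ a1c mc] mmin w Cc by simp
      then show "w \<in> up a1" unfolding up_def using w Cc by simp
    qed
    moreover have "is_chain L ?C'" using C(1) unfolding is_chain_def by auto
    ultimately have "card ?C' \<le> H a1" using H_ge by simp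
    then have Ha1: "H a \<le> H a1 + 1" using C(3) aC fC by simp
    show ?thesis
    proof (cases "a1 = b")
      case True then show ?thesis using Ha1 by simp
    next
      case False
      let ?j = "a1 \<squnion> b"
      have jc: "?j \<in> carrier L" using a1c bc by simp
      have m1: "a1 \<sqinter> b = a" using covers_meet[OF aa1 less.prems False] .
      have m2: "b \<sqinter> a1 = a" using covers_meet[OF less.prems aa1] False by metis
      have cj1: "covers L b ?j" using smodD[OF a1c bc] m1 aa1 by simp
      have "covers L a1 (b \<squnion> a1)" using smodD[OF bc a1c] m2 less.prems by simp
      then have cj2: "covers L a1 ?j" using join_comm by metis
      have lt: "card (up a1) < card (up a)" using up_strict[OF ac a1c] aa1 covers_le by simp
      have IH: "H a1 \<le> H ?j + 1" using less.hyps[OF lt cj2] .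
      obtain Cj where Cj: "is_chain L Cj" "Cj \<subseteq> up ?j" "card Cj = H ?j" using H_ex by blast
      have fCj: "finite Cj" using Cj(1) fin finite_subset unfolding is_chain_def by metis
      have bj: "b \<sqsubseteq> ?j" "b \<noteq> ?j" using cj1 covers_le by auto
      have bnC: "b \<notin> Cj"
      proof
        assume "b \<in> Cj"
        then have "?j \<sqsubseteq> b" using Cj(2) unfolding up_def by auto
        then show False using bj le_antisym bc jc by metis
      qed
      have "Cj \<subseteq> up b"
      proof
        fix w assume "w \<in> Cj"
        then have "w \<in> carrier L" "?j \<sqsubseteq> w" using Cj(2) unfolding up_def by auto
        then show "w \<in> up b" unfolding up_def using le_trans[OF bj(1) _ bc jc] by simp
      qed
      then have "card (insert b Cj) \<le> H b" using chain_insert[OF Cj(1) _ bc] H_ge by metis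
      then have "H ?j + 1 \<le> H b" using bnC fCj Cj(3) by simp
      then show ?thesis using Ha1 IH by simp
    qed
  qed
qed

lemma dn_bot: "dn \<bottom> = {\<bottom>}"
  unfolding dn_def using le_antisym bottom_lower bottom_closed by auto

lemma H_D: "x \<in> D \<Longrightarrow> H \<bottom> + 1 \<le> H x + card (dn x)"
proof (induction "card (dn x)" arbitrary: x rule: less_induct)
  case less
  have xc: "x \<in> carrier L" and xle: "x \<sqsubseteq> c" using less.prems D_mem by auto
  show ?case
  proof (cases "x = \<bottom>")
    case True then show ?thesis using dn_bot by simp
  next
    case False
    obtain p where px: "covers L p x" using cover_below[of "\<bottom>" x] xc False by auto
    have pc: "p \<in> carrier L" and pxle: "p \<sqsubseteq> x" "p \<noteq> x" using px covers_carrier covers_le by auto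
    have pD: "p \<in> D" using D_mem pc le_trans[OF pxle(1) xle pc xc cc] by simp
    have eq: "dn x = insert x (dn p)"
    proof
      show "dn x \<subseteq> insert x (dn p)"
      proof
        fix w assume w: "w \<in> dn x"
        show "w \<in> insert x (dn p)"
        proof (cases "w = x")
          case False
          have wc: "w \<in> carrier L" "w \<sqsubseteq> x" using w dn_def by auto
          obtain q where qx: "covers L q x" and wq: "w \<sqsubseteq> q" using cover_below[OF wc(1) xc wc(2) False] by auto
          have qc: "q \<in> carrier L" using qx covers_carrier by auto
          have qD: "q \<in> D" using D_mem qc le_trans[OF _ xle qc xc cc] qx covers_le by simp
          have "q = p" using D_chain[OF qD pD] covers_lower_inc[OF qx px] covers_lower_inc[OF px qx] by metis
          then show ?thesis using wq wc unfolding dn_def by simp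
        qed simp
      qed
    next
      show "insert x (dn p) \<subseteq> dn x" unfolding dn_def using xc pxle le_trans pc by auto
    qed
    have xnp: "x \<notin> dn p" unfolding dn_def using pxle le_antisym pc xc by auto
    have cd: "card (dn x) = card (dn p) + 1" using eq xnp dn_fin by simp
    have lt: "card (dn p) < card (dn x)" using cd by simp
    have "H \<bottom> + 1 \<le> H p + card (dn p)" using less.hyps[OF lt pD] .
    moreover have "H p \<le> H x + 1" using H_cover[OF px] .
    ultimately show ?thesis using cd by simp
  qed
qed

lemma Dfin: "finite D" unfolding D_dn using dn_fin .
lemma D_sub: "D \<subseteq> carrier L" unfolding D_def down_set_def by auto

lemma H_bot: "H \<bottom> = card D + 1"
proof -
  have "H \<bottom> + 1 \<le> H c + card D" using H_D[of c] cc D_mem D_dn by simp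
  moreover have "H c \<le> H \<top> + 1" using H_cover[OF c_cov] .
  ultimately have le: "H \<bottom> \<le> card D + 1" using H_top by simp
  have tnD: "\<top> \<notin> D" using top_S S_def by simp
  have "is_chain L (insert \<top> D)" unfolding is_chain_def
    using D_chain D_sub top_closed top_higher by (auto simp: subset_iff)
  moreover have "insert \<top> D \<subseteq> up \<bottom>" unfolding up_def using D_sub top_closed bottom_lower by auto
  ultimately have "card (insert \<top> D) \<le> H \<bottom>" using H_ge by simp
  then show ?thesis using le tnD Dfin by simp
qed

lemma length_eq: "lattice_length L = card D"
proof -
  have h: "\<And>C. is_chain L C \<Longrightarrow> C \<subseteq> up \<bottom>"
    unfolding is_chain_def up_def using bottom_lower by auto
  have "{card C | C. is_chain L C} = {card C | C. is_chain L C \<and> C \<subseteq> up \<bottom>}"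
    using h by blast
  then have "lattice_length L = H \<bottom> - 1" unfolding lattice_length_def H_def by simp
  then show ?thesis using H_bot by simp
qed

lemma card_S: "card S = card (carrier L) - lattice_length L"
  unfolding S_def length_eq using card_Diff_subset[OF Dfin D_sub] by simp


lemma SD_disj: "x \<in> S \<Longrightarrow> x \<notin> D" unfolding S_def by simp

lemma Y_ex: "b \<in> D \<Longrightarrow> b \<noteq> c \<Longrightarrow> \<exists>y. y \<in> S \<and> covers L b y"
proof -
  assume bD: "b \<in> D" and bnc: "b \<noteq> c"
  have bB: "b \<in> B" using bD D_B by auto
  have bc: "b \<in> carrier L" and ble: "b \<sqsubseteq> c" using bD D_mem by auto
  have ndi: "\<not> doubly_irreducible L b"
  proof
    assume "doubly_irreducible L b"
    then have "c \<sqsubseteq> b" using c_min bB by simp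
    then show False using ble bnc le_antisym bc cc by metis
  qed
  have "card {y. covers L y b} \<le> 1"
  proof (rule one_lower)
    fix r1 r2 assume r: "covers L r1 b" "covers L r2 b"
    have rc: "r1 \<in> carrier L" "r2 \<in> carrier L" using r covers_carrier by auto
    have "r1 \<in> D" "r2 \<in> D" using D_mem rc r covers_le le_trans[OF _ ble _ bc cc] by auto
    then have "r1 \<sqsubseteq> r2 \<or> r2 \<sqsubseteq> r1" using D_chain by simp
    then show "r1 = r2" using covers_lower_inc r by metis
  qed
  then have nup: "\<not> card {y. covers L b y} \<le> 1" using ndi bc unfolding doubly_irreducible_def by simp
  obtain u where bu: "covers L b u" and uc: "u \<sqsubseteq> c" using cover_above[OF bc cc ble bnc] by auto
  have uD: "u \<in> D" using D_mem bu covers_carrier uc by auto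
  obtain v where bv: "covers L b v" and vu: "v \<noteq> u" using two_upper[OF nup bu] by auto
  have vc: "v \<in> carrier L" using bv covers_carrier by auto
  have "v \<notin> D"
  proof
    assume "v \<in> D"
    then have "u \<sqsubseteq> v \<or> v \<sqsubseteq> u" using D_chain uD by simp
    then show False using covers_upper_inc bu bv vu by metis
  qed
  then have "v \<in> S" using vc S_def by simp
  then show ?thesis using bv by auto
qed

lemma Y_uniq: "b \<in> D \<Longrightarrow> y1 \<in> S \<Longrightarrow> y2 \<in> S \<Longrightarrow> covers L b y1 \<Longrightarrow> covers L b y2 \<Longrightarrow> y1 = y2"
proof (rule ccontr)
  assume a: "b \<in> D" "y1 \<in> S" "y2 \<in> S" "covers L b y1" "covers L b y2" "y1 \<noteq> y2"
  have "y1 \<sqinter> y2 = b" using covers_meet a by simp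
  moreover have "y1 \<sqinter> y2 \<in> S" using S_meet a by simp
  ultimately show False using a(1) SD_disj by simp
qed

definition Y where "Y b = (if b = c then \<top> else (THE y. y \<in> S \<and> covers L b y))"

lemma Y_prop: "b \<in> D \<Longrightarrow> Y b \<in> S \<and> covers L b (Y b)"
proof (cases "b = c")
  case True then show ?thesis using top_S c_cov Y_def by simp
next
  case False
  assume bD: "b \<in> D"
  obtain y where y: "y \<in> S" "covers L b y" using Y_ex[OF bD False] by auto
  have "(THE y. y \<in> S \<and> covers L b y) = y"
    using y Y_uniq[OF bD] by (intro the_equality) auto
  then show ?thesis using y False Y_def by simp
qed

lemma YS: "b \<in> D \<Longrightarrow> Y b \<in> S" using Y_prop by simp
lemma Yc: "b \<in> D \<Longrightarrow> Y b \<in> carrier L" using Y_prop S_sub by auto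
lemma Ycov: "b \<in> D \<Longrightarrow> covers L b (Y b)" using Y_prop by simp

lemma Y_char: "b \<in> D \<Longrightarrow> z \<in> S \<Longrightarrow> b \<sqsubseteq> z \<longleftrightarrow> Y b \<sqsubseteq> z"
proof
  assume bD: "b \<in> D" and zS: "z \<in> S" and bz: "b \<sqsubseteq> z"
  have bc: "b \<in> carrier L" using bD D_sub by auto
  have zc: "z \<in> carrier L" using zS S_sub by auto
  have yc: "Y b \<in> carrier L" using Yc bD by simp
  let ?m = "Y b \<sqinter> z"
  have mS: "?m \<in> S" using S_meet YS[OF bD] zS by simp
  have mc: "?m \<in> carrier L" using yc zc by simp
  have bm: "b \<sqsubseteq> ?m" using meet_le[OF _ bz yc zc bc] Ycov[OF bD] covers_le by simp
  have my: "?m \<sqsubseteq> Y b" using meet_left[OF yc zc] .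
  have "?m = b \<or> ?m = Y b" using coversD[OF Ycov[OF bD] mc bm my] .
  then have "?m = Y b" using mS bD SD_disj by auto
  then show "Y b \<sqsubseteq> z" using meet_right[OF yc zc] by simp
next
  assume bD: "b \<in> D" and zS: "z \<in> S" and yz: "Y b \<sqsubseteq> z"
  have bc: "b \<in> carrier L" using bD D_sub by auto
  have zc: "z \<in> carrier L" using zS S_sub by auto
  have yc: "Y b \<in> carrier L" using Yc bD by simp
  show "b \<sqsubseteq> z" using le_trans[OF _ yz bc yc zc] Ycov[OF bD] covers_le by simp
qed

lemma Y_mono: "b1 \<in> D \<Longrightarrow> b2 \<in> D \<Longrightarrow> b1 \<sqsubseteq> b2 \<longleftrightarrow> Y b1 \<sqsubseteq> Y b2"
proof -
  have fwd: "\<And>b1 b2. b1 \<in> D \<Longrightarrow> b2 \<in> D \<Longrightarrow> b1 \<sqsubseteq> b2 \<Longrightarrow> Y b1 \<sqsubseteq> Y b2"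
  proof -
    fix b1 b2 assume a: "b1 \<in> D" "b2 \<in> D" "b1 \<sqsubseteq> b2"
    have c: "b1 \<in> carrier L" "b2 \<in> carrier L" "Y b2 \<in> carrier L" using a D_sub Yc by auto
    have "b1 \<sqsubseteq> Y b2" using le_trans[OF a(3) _ c] Ycov[OF a(2)] covers_le by simp
    then show "Y b1 \<sqsubseteq> Y b2" using Y_char[OF a(1) YS[OF a(2)]] by simp
  qed
  assume a: "b1 \<in> D" "b2 \<in> D"
  show ?thesis
  proof
    assume "b1 \<sqsubseteq> b2" then show "Y b1 \<sqsubseteq> Y b2" using fwd a by simp
  next
    assume y12: "Y b1 \<sqsubseteq> Y b2"
    show "b1 \<sqsubseteq> b2"
    proof (rule ccontr)
      assume n: "\<not> b1 \<sqsubseteq> b2"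
      then have b21: "b2 \<sqsubseteq> b1" using D_chain[OF a(1) a(2)] by simp
      have c: "b1 \<in> carrier L" "b2 \<in> carrier L" using a D_sub by auto
      have "Y b2 \<sqsubseteq> Y b1" using fwd a b21 by simp
      then have eq: "Y b1 = Y b2" using y12 le_antisym[OF y12 _ Yc[OF a(1)] Yc[OF a(2)]] by simp
      have "b1 \<sqsubseteq> Y b2" using eq Ycov[OF a(1)] covers_le by metis
      then have "b1 = b2 \<or> b1 = Y b2" using coversD[OF Ycov[OF a(2)] c(1) b21] by simp
      then show False using n c YS[OF a(2)] a(1) SD_disj by auto
    qed
  qed
qed

lemma Y_inj: "b1 \<in> D \<Longrightarrow> b2 \<in> D \<Longrightarrow> Y b1 = Y b2 \<Longrightarrow> b1 = b2"
proof -
  assume a: "b1 \<in> D" "b2 \<in> D" "Y b1 = Y b2"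
  have c: "b1 \<in> carrier L" "b2 \<in> carrier L" "Y b1 \<in> carrier L" using a D_sub Yc by auto
  have "Y b1 \<sqsubseteq> Y b2" "Y b2 \<sqsubseteq> Y b1" using a(3) c(3) by simp_all
  then have "b1 \<sqsubseteq> b2" "b2 \<sqsubseteq> b1" using Y_mono[OF a(1) a(2)] Y_mono[OF a(2) a(1)] by simp_all
  then show "b1 = b2" using le_antisym c by simp
qed

lemma B_lam2: "u \<in> B \<Longrightarrow> v \<in> carrier L \<Longrightarrow> \<not> u \<sqsubseteq> v \<Longrightarrow> \<not> v \<sqsubseteq> u \<Longrightarrow> lam u v \<and> \<not> lam v u"
  using B_lam lam_asym by metis

lemma Y_BS: "b \<in> D \<Longrightarrow> Y b \<in> E.B"
  unfolding E.B_iff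
proof (intro conjI ballI notI)
  assume bD: "b \<in> D"
  show "Y b \<in> carrier LS" using YS bD by simp
  fix w assume "w \<in> carrier LS" and lw: "lamS w (Y b)"
  then have wS: "w \<in> S" by simp
  have lwy: "lam w (Y b)" using lw lamS_iff by simp
  have bB: "b \<in> B" using bD D_B by auto
  have c: "b \<in> carrier L" "w \<in> carrier L" "Y b \<in> carrier L" using bD wS D_sub S_sub Yc by auto
  have by': "b \<sqsubseteq> Y b" using Ycov[OF bD] covers_le by simp
  have nbw: "\<not> b \<sqsubseteq> w" using Y_char[OF bD wS] lam_inc[OF lwy] by simp
  have nwb: "\<not> w \<sqsubseteq> b"
  proof
    assume "w \<sqsubseteq> b"
    then have "w \<sqsubseteq> c" using le_trans[OF _ _ c(2) c(1) cc] bD D_mem by simp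
    then show False using wS S_mem by simp
  qed
  have "lam b w" using B_lam[OF bB c(2) nbw nwb] .
  then have "w \<sqsubseteq> Y b \<or> lam (Y b) w" using tr2[OF c(2) c(1) c(3)] by' by simp
  then show False using lam_inc[OF lwy] lam_asym[OF lwy] by simp
qed

lemma Y_onto: "w \<in> E.B \<Longrightarrow> \<exists>b\<in>D. Y b = w"
proof -
  assume wB: "w \<in> E.B"
  have wS: "w \<in> S" using wB E.B_iff by simp
  have wc: "w \<in> carrier L" using wS S_sub by auto
  let ?A = "{b\<in>D. Y b \<sqsubseteq> w}"
  have fA: "finite ?A" using Dfin by simp
  have "\<bottom> \<in> ?A" using bot_D Y_char[OF bot_D wS] wc bottom_lower by simp
  then have neA: "?A \<noteq> {}" by auto
  obtain b where bA: "b \<in> ?A" and bmax: "\<forall>a\<in>?A. card (dn a) \<le> card (dn b)"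
    using finite_max_nat[OF fA neA, of "\<lambda>a. card (dn a)"] by auto
  have bD: "b \<in> D" and ybw: "Y b \<sqsubseteq> w" using bA by auto
  have bc: "b \<in> carrier L" and blc: "b \<sqsubseteq> c" using bD D_mem by auto
  show ?thesis
  proof (cases "b = c")
    case True
    then have "\<top> \<sqsubseteq> w" using ybw Y_def by simp
    then have "w = \<top>" using le_antisym top_higher wc top_closed by metis
    then show ?thesis using True Y_def cc D_mem by auto
  next
    case bnc: False
    obtain b' where bb': "covers L b b'" and b'c: "b' \<sqsubseteq> c" using cover_above[OF bc cc blc bnc] by auto
    have b'C: "b' \<in> carrier L" using bb' covers_carrier by auto
    have b'D: "b' \<in> D" using D_mem b'C b'c by simp
    have "card (dn b) < card (dn b')" using dn_strict[OF bc b'C] bb' covers_le by simp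
    then have b'nA: "b' \<notin> ?A" using bmax by fastforce
    then have ny': "\<not> Y b' \<sqsubseteq> w" using b'D by simp
    let ?y = "Y b" and ?y' = "Y b'"
    have yc: "?y \<in> carrier L" "?y' \<in> carrier L" using Yc bD b'D by auto
    have bb'le: "b \<sqsubseteq> b'" using bb' covers_le by simp
    have by': "b \<sqsubseteq> ?y" using Ycov[OF bD] covers_le by simp
    let ?mt = "b' \<sqinter> ?y"
    have mtc: "?mt \<in> carrier L" using b'C yc by simp
    have bmt: "b \<sqsubseteq> ?mt" using meet_le[OF bb'le by' b'C yc(1) bc] .
    have mtb': "?mt \<sqsubseteq> b'" using meet_left[OF b'C yc(1)] .
    have "?mt = b \<or> ?mt = b'" using coversD[OF bb' mtc bmt mtb'] .
    moreover have "?mt \<noteq> b'"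
    proof
      assume "?mt = b'"
      then have "b' \<sqsubseteq> ?y" using meet_right[OF b'C yc(1)] by simp
      then have "b' = b \<or> b' = ?y" using coversD[OF Ycov[OF bD] b'C bb'le] by simp
      then show False using bb' covers_le b'D YS[OF bD] SD_disj by auto
    qed
    ultimately have mtb: "?mt = b" by simp
    have "covers L ?y (b' \<squnion> ?y)" using smodD[OF b'C yc(1)] mtb bb' by simp
    moreover have "b' \<squnion> ?y = ?y'"
    proof (rule le_antisym)
      have jS: "b' \<squnion> ?y \<in> S" using S_up[OF YS[OF bD]] join_right[OF b'C yc(1)] b'C yc by simp
      have "b' \<sqsubseteq> b' \<squnion> ?y" using join_left[OF b'C yc(1)] .
      then show "?y' \<sqsubseteq> b' \<squnion> ?y" using Y_char[OF b'D jS] by simp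
      have "?y \<sqsubseteq> ?y'" using Y_mono[OF bD b'D] bb'le by simp
      moreover have "b' \<sqsubseteq> ?y'" using Ycov[OF b'D] covers_le by simp
      ultimately show "b' \<squnion> ?y \<sqsubseteq> ?y'" using join_le b'C yc by simp
    qed (use b'C yc in simp_all)
    ultimately have cyy: "covers L ?y ?y'" by simp
    have "?y' \<in> E.B" using Y_BS[OF b'D] .
    then have "w \<sqsubseteq> ?y' \<or> ?y' \<sqsubseteq> w" using E.B_chain[OF wB] by simp
    then have wy': "w \<sqsubseteq> ?y'" using ny' by simp
    have "w = ?y \<or> w = ?y'" using coversD[OF cyy wc ybw wy'] .
    then have "w = ?y" using ny' wc by auto
    then show ?thesis using bD by auto
  qed
qed


lemma S_eq: "S = carrier L - down_set L c" unfolding S_def D_def by simp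
lemma D_eq: "D = down_set L c" unfolding D_def by simp
lemma pd_LS: "pd LS lamS" using pdS unfolding pd_def .

end

definition simw :: "'a gorder \<Rightarrow> ('a \<Rightarrow> 'a \<Rightarrow> bool) \<Rightarrow> 'b gorder \<Rightarrow> ('b \<Rightarrow> 'b \<Rightarrow> bool) \<Rightarrow> ('a \<Rightarrow> 'b) \<Rightarrow> bool" where
  "simw L lam L' lam' \<phi> \<longleftrightarrow> bij_betw \<phi> (carrier L) (carrier L') \<and>
     (\<forall>x\<in>carrier L. \<forall>y\<in>carrier L. x \<sqsubseteq>\<^bsub>L\<^esub> y \<longleftrightarrow> \<phi> x \<sqsubseteq>\<^bsub>L'\<^esub> \<phi> y) \<and>
     (\<forall>x y z. covers L x y \<and> covers L x z \<longrightarrow> (lam y z \<longleftrightarrow> lam' (\<phi> y) (\<phi> z))) \<and>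
     (\<forall>x y z. covers L y x \<and> covers L z x \<longrightarrow> (lam y z \<longleftrightarrow> lam' (\<phi> y) (\<phi> z)))"

lemma similar_iff: "similar L lam L' lam' \<longleftrightarrow> (\<exists>\<phi>. simw L lam L' lam' \<phi>)"
  unfolding similar_def simw_def by simp

lemma sim_covers:
  assumes P1: "pd L1 lam1" and P2: "pd L2 lam2" and sw: "simw L1 lam1 L2 lam2 \<phi>"
    and xy: "x \<in> carrier L1" "y \<in> carrier L1"
  shows "covers L1 x y \<longleftrightarrow> covers L2 (\<phi> x) (\<phi> y)"
proof -
  interpret P1: pd L1 lam1 by (rule P1)
  interpret P2: pd L2 lam2 by (rule P2)
  have bij: "bij_betw \<phi> (carrier L1) (carrier L2)" using sw unfolding simw_def by simp
  have ord: "\<And>x y. x \<in> carrier L1 \<Longrightarrow> y \<in> carrier L1 \<Longrightarrow> x \<sqsubseteq>\<^bsub>L1\<^esub> y \<longleftrightarrow> \<phi> x \<sqsubseteq>\<^bsub>L2\<^esub> \<phi> y"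
    using sw unfolding simw_def by simp
  have inj: "\<And>x y. x \<in> carrier L1 \<Longrightarrow> y \<in> carrier L1 \<Longrightarrow> \<phi> x = \<phi> y \<longleftrightarrow> x = y"
    using bij unfolding bij_betw_def inj_on_def by auto
  have into: "\<And>x. x \<in> carrier L1 \<Longrightarrow> \<phi> x \<in> carrier L2" using bij bij_betwE by metis
  have onto: "\<And>z. z \<in> carrier L2 \<Longrightarrow> \<exists>w\<in>carrier L1. z = \<phi> w"
    using bij unfolding bij_betw_def by auto
  have "covers L1 x y \<longleftrightarrow> x \<sqsubseteq>\<^bsub>L1\<^esub> y \<and> x \<noteq> y \<and>
      (\<forall>z\<in>carrier L1. x \<sqsubseteq>\<^bsub>L1\<^esub> z \<longrightarrow> z \<sqsubseteq>\<^bsub>L1\<^esub> y \<longrightarrow> z = x \<or> z = y)"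
    using P1.covers_iff xy by simp
  also have "\<dots> \<longleftrightarrow> \<phi> x \<sqsubseteq>\<^bsub>L2\<^esub> \<phi> y \<and> \<phi> x \<noteq> \<phi> y \<and>
      (\<forall>z\<in>carrier L1. \<phi> x \<sqsubseteq>\<^bsub>L2\<^esub> \<phi> z \<longrightarrow> \<phi> z \<sqsubseteq>\<^bsub>L2\<^esub> \<phi> y \<longrightarrow> \<phi> z = \<phi> x \<or> \<phi> z = \<phi> y)"
    using ord inj xy by auto
  also have "\<dots> \<longleftrightarrow> \<phi> x \<sqsubseteq>\<^bsub>L2\<^esub> \<phi> y \<and> \<phi> x \<noteq> \<phi> y \<and>
      (\<forall>z\<in>carrier L2. \<phi> x \<sqsubseteq>\<^bsub>L2\<^esub> z \<longrightarrow> z \<sqsubseteq>\<^bsub>L2\<^esub> \<phi> y \<longrightarrow> z = \<phi> x \<or> z = \<phi> y)"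
    using onto into by metis
  also have "\<dots> \<longleftrightarrow> covers L2 (\<phi> x) (\<phi> y)" using P2.covers_iff into xy by simp
  finally show ?thesis .
qed

lemma sim_bot:
  assumes P1: "pd L1 lam1" and P2: "pd L2 lam2" and sw: "simw L1 lam1 L2 lam2 \<phi>"
  shows "\<phi> (\<bottom>\<^bsub>L1\<^esub>) = \<bottom>\<^bsub>L2\<^esub>"
proof -
  interpret P1: pd L1 lam1 by (rule P1)
  interpret P2: pd L2 lam2 by (rule P2)
  have bij: "bij_betw \<phi> (carrier L1) (carrier L2)" using sw unfolding simw_def by simp
  have ord: "\<And>x y. x \<in> carrier L1 \<Longrightarrow> y \<in> carrier L1 \<Longrightarrow> x \<sqsubseteq>\<^bsub>L1\<^esub> y \<longleftrightarrow> \<phi> x \<sqsubseteq>\<^bsub>L2\<^esub> \<phi> y"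
    using sw unfolding simw_def by simp
  have into: "\<And>x. x \<in> carrier L1 \<Longrightarrow> \<phi> x \<in> carrier L2" using bij bij_betwE by metis
  have onto: "\<And>z. z \<in> carrier L2 \<Longrightarrow> \<exists>w\<in>carrier L1. z = \<phi> w"
    using bij unfolding bij_betw_def by auto
  show ?thesis
  proof (rule P2.bottom_eq)
    show "\<phi> \<bottom>\<^bsub>L1\<^esub> \<in> carrier L2" using into P1.bottom_closed by simp
    fix x assume "x \<in> carrier L2"
    then obtain w where w: "w \<in> carrier L1" "x = \<phi> w" using onto by auto
    then show "\<phi> \<bottom>\<^bsub>L1\<^esub> \<sqsubseteq>\<^bsub>L2\<^esub> x" using ord[OF P1.bottom_closed w(1)] P1.bottom_lower by simp
  qed
qed

lemma sim_B:
  assumes P1: "pd L1 lam1" and P2: "pd L2 lam2" and sw: "simw L1 lam1 L2 lam2 \<phi>"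
  shows "x \<in> left_boundary L1 lam1 \<Longrightarrow> \<phi> x \<in> left_boundary L2 lam2"
proof (induction "card (pd.dn L1 x)" arbitrary: x rule: less_induct)
  case less
  interpret P1: pd L1 lam1 by (rule P1)
  interpret P2: pd L2 lam2 by (rule P2)
  have bij: "bij_betw \<phi> (carrier L1) (carrier L2)" using sw unfolding simw_def by simp
  have into: "\<And>x. x \<in> carrier L1 \<Longrightarrow> \<phi> x \<in> carrier L2" using bij bij_betwE by metis
  have onto: "\<And>z. z \<in> carrier L2 \<Longrightarrow> \<exists>w\<in>carrier L1. z = \<phi> w"
    using bij unfolding bij_betw_def by auto
  have lamup: "\<And>x y z. covers L1 x y \<Longrightarrow> covers L1 x z \<Longrightarrow> (lam1 y z \<longleftrightarrow> lam2 (\<phi> y) (\<phi> z))"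
    using sw unfolding simw_def by blast
  have xc: "x \<in> carrier L1" using less.prems P1.B_iff by simp
  show ?case
  proof (cases "x = \<bottom>\<^bsub>L1\<^esub>")
    case True then show ?thesis using sim_bot[OF P1 P2 sw] P2.bot_B by simp
  next
    case False
    obtain p where pB: "p \<in> left_boundary L1 lam1" and px: "covers L1 p x" using P1.B_lower[OF less.prems False] by auto
    have pc: "p \<in> carrier L1" using px P1.covers_carrier by auto
    have lt: "card (P1.dn p) < card (P1.dn x)" using P1.dn_strict[OF pc xc] px P1.covers_le by simp
    have IH: "\<phi> p \<in> left_boundary L2 lam2" using less.hyps[OF lt pB] .
    have cpx: "covers L2 (\<phi> p) (\<phi> x)" using sim_covers[OF P1 P2 sw pc xc] px by simp
    show ?thesis
    proof (rule P2.leftmost_B[OF IH cpx])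
      fix v' assume pv': "covers L2 (\<phi> p) v'" and vx: "v' \<noteq> \<phi> x"
      have "v' \<in> carrier L2" using pv' P2.covers_carrier by auto
      then obtain v where vc: "v \<in> carrier L1" and vv: "v' = \<phi> v" using onto by auto
      have pv: "covers L1 p v" using sim_covers[OF P1 P2 sw pc vc] pv' vv by simp
      have "v \<noteq> x" using vx vv by auto
      then have "\<not> x \<sqsubseteq>\<^bsub>L1\<^esub> v" "\<not> v \<sqsubseteq>\<^bsub>L1\<^esub> x" using P1.covers_upper_inc px pv by metis+
      then have "lam1 x v" using P1.B_lam[OF less.prems vc] by simp
      then show "lam2 (\<phi> x) v'" using lamup[OF px pv] vv by simp
    qed
  qed
qed

lemma sim_inv:
  assumes P1: "pd L1 lam1" and P2: "pd L2 lam2" and sw: "simw L1 lam1 L2 lam2 \<phi>"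
  shows "simw L2 lam2 L1 lam1 (the_inv_into (carrier L1) \<phi>)"
proof -
  interpret P1: pd L1 lam1 by (rule P1)
  interpret P2: pd L2 lam2 by (rule P2)
  let ?\<psi> = "the_inv_into (carrier L1) \<phi>"
  have bij: "bij_betw \<phi> (carrier L1) (carrier L2)" using sw unfolding simw_def by simp
  have ord: "\<And>x y. x \<in> carrier L1 \<Longrightarrow> y \<in> carrier L1 \<Longrightarrow> x \<sqsubseteq>\<^bsub>L1\<^esub> y \<longleftrightarrow> \<phi> x \<sqsubseteq>\<^bsub>L2\<^esub> \<phi> y"
    using sw unfolding simw_def by simp
  have lamup: "\<And>x y z. covers L1 x y \<Longrightarrow> covers L1 x z \<Longrightarrow> (lam1 y z \<longleftrightarrow> lam2 (\<phi> y) (\<phi> z))"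
    using sw unfolding simw_def by blast
  have lamdn: "\<And>x y z. covers L1 y x \<Longrightarrow> covers L1 z x \<Longrightarrow> (lam1 y z \<longleftrightarrow> lam2 (\<phi> y) (\<phi> z))"
    using sw unfolding simw_def by blast
  have bij2: "bij_betw ?\<psi> (carrier L2) (carrier L1)" using bij_betw_the_inv_into[OF bij] .
  have psic: "\<And>x. x \<in> carrier L2 \<Longrightarrow> ?\<psi> x \<in> carrier L1" using bij2 bij_betwE by metis
  have fp: "\<And>x. x \<in> carrier L2 \<Longrightarrow> \<phi> (?\<psi> x) = x" using f_the_inv_into_f_bij_betw[OF bij] by simp
  have ord2: "\<forall>x\<in>carrier L2. \<forall>y\<in>carrier L2. x \<sqsubseteq>\<^bsub>L2\<^esub> y \<longleftrightarrow> ?\<psi> x \<sqsubseteq>\<^bsub>L1\<^esub> ?\<psi> y"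
    using ord psic fp by metis
  have cov: "\<And>x y. x \<in> carrier L2 \<Longrightarrow> y \<in> carrier L2 \<Longrightarrow> covers L2 x y \<longleftrightarrow> covers L1 (?\<psi> x) (?\<psi> y)"
    using sim_covers[OF P1 P2 sw] psic fp by metis
  have up2: "\<forall>x y z. covers L2 x y \<and> covers L2 x z \<longrightarrow> (lam2 y z \<longleftrightarrow> lam1 (?\<psi> y) (?\<psi> z))"
  proof (intro allI impI)
    fix x y z assume a: "covers L2 x y \<and> covers L2 x z"
    have c: "x \<in> carrier L2" "y \<in> carrier L2" "z \<in> carrier L2" using a P2.covers_carrier by auto
    have "covers L1 (?\<psi> x) (?\<psi> y)" "covers L1 (?\<psi> x) (?\<psi> z)" using a cov c by auto
    then show "lam2 y z \<longleftrightarrow> lam1 (?\<psi> y) (?\<psi> z)" using lamup fp c by metis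
  qed
  have dn2: "\<forall>x y z. covers L2 y x \<and> covers L2 z x \<longrightarrow> (lam2 y z \<longleftrightarrow> lam1 (?\<psi> y) (?\<psi> z))"
  proof (intro allI impI)
    fix x y z assume a: "covers L2 y x \<and> covers L2 z x"
    have c: "x \<in> carrier L2" "y \<in> carrier L2" "z \<in> carrier L2" using a P2.covers_carrier by auto
    have "covers L1 (?\<psi> y) (?\<psi> x)" "covers L1 (?\<psi> z) (?\<psi> x)" using a cov c by auto
    then show "lam2 y z \<longleftrightarrow> lam1 (?\<psi> y) (?\<psi> z)" using lamdn fp c by metis
  qed
  show ?thesis unfolding simw_def using bij2 ord2 up2 dn2 by simp
qed


lemma cl_pd: "cl L lam c \<Longrightarrow> pd L lam"
  unfolding cl_def by simp

lemma uniq: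
  assumes A: "cl L lam c" and B: "cl L' lam' c'"
    and sim: "similar (induced_order L (carrier L - down_set L c)) (induced_left lam (carrier L - down_set L c))
               (induced_order L' (carrier L' - down_set L' c')) (induced_left lam' (carrier L' - down_set L' c'))"
  shows "similar L lam L' lam'"
proof -
  interpret A: cl L lam c by (rule A)
  interpret B: cl L' lam' c' by (rule B)
  have "similar A.LS A.lamS B.LS B.lamS" using sim A.S_eq B.S_eq by simp
  then obtain \<phi> where sw: "simw A.LS A.lamS B.LS B.lamS \<phi>" using similar_iff by metis
  have PA: "pd A.LS A.lamS" by (rule A.pd_LS)
  have PB: "pd B.LS B.lamS" by (rule B.pd_LS)
  have bijS: "bij_betw \<phi> A.S B.S" using sw unfolding simw_def by simp
  have ordS: "\<And>x y. x \<in> A.S \<Longrightarrow> y \<in> A.S \<Longrightarrow> x \<sqsubseteq>\<^bsub>L\<^esub> y \<longleftrightarrow> \<phi> x \<sqsubseteq>\<^bsub>L'\<^esub> \<phi> y"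
    using sw unfolding simw_def by simp
  have lamupS: "\<And>x y z. covers A.LS x y \<Longrightarrow> covers A.LS x z \<Longrightarrow> (A.lamS y z \<longleftrightarrow> B.lamS (\<phi> y) (\<phi> z))"
    using sw unfolding simw_def by blast
  have lamdnS: "\<And>x y z. covers A.LS y x \<Longrightarrow> covers A.LS z x \<Longrightarrow> (A.lamS y z \<longleftrightarrow> B.lamS (\<phi> y) (\<phi> z))"
    using sw unfolding simw_def by blast
  have phiS: "\<And>x. x \<in> A.S \<Longrightarrow> \<phi> x \<in> B.S" using bijS bij_betwE by metis
  have phiB: "\<And>x. x \<in> A.E.B \<Longrightarrow> \<phi> x \<in> B.E.B" using sim_B[OF PA PB sw] by simp
  define \<psi> where "\<psi> x = (if x \<in> A.D then (THE b'. b' \<in> B.D \<and> B.Y b' = \<phi> (A.Y x)) else \<phi> x)" for x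
  have psiD: "\<And>x. x \<in> A.D \<Longrightarrow> \<psi> x \<in> B.D \<and> B.Y (\<psi> x) = \<phi> (A.Y x)"
  proof -
    fix x assume xD: "x \<in> A.D"
    have "\<phi> (A.Y x) \<in> B.E.B" using phiB A.Y_BS xD by simp
    then obtain b' where b': "b' \<in> B.D" "B.Y b' = \<phi> (A.Y x)" using B.Y_onto by metis
    have "(THE b'. b' \<in> B.D \<and> B.Y b' = \<phi> (A.Y x)) = b'"
      using b' B.Y_inj by (intro the_equality) auto
    then show "\<psi> x \<in> B.D \<and> B.Y (\<psi> x) = \<phi> (A.Y x)" using b' xD \<psi>_def by simp
  qed
  have psiS: "\<And>x. x \<in> A.S \<Longrightarrow> \<psi> x = \<phi> x" using A.SD_disj \<psi>_def by simp
  have carrA: "\<And>x. x \<in> carrier L \<Longrightarrow> x \<in> A.D \<or> x \<in> A.S" using A.S_def by auto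
  have carrB: "\<And>x. x \<in> carrier L' \<Longrightarrow> x \<in> B.D \<or> x \<in> B.S" using B.S_def by auto
  have psic: "\<And>x. x \<in> carrier L \<Longrightarrow> \<psi> x \<in> carrier L'"
    using carrA psiD psiS phiS B.D_sub B.S_sub by (metis subsetD)
  have ord: "\<And>x y. x \<in> carrier L \<Longrightarrow> y \<in> carrier L \<Longrightarrow> x \<sqsubseteq>\<^bsub>L\<^esub> y \<longleftrightarrow> \<psi> x \<sqsubseteq>\<^bsub>L'\<^esub> \<psi> y"
  proof -
    fix x y assume xc: "x \<in> carrier L" and yc: "y \<in> carrier L"
    show "x \<sqsubseteq>\<^bsub>L\<^esub> y \<longleftrightarrow> \<psi> x \<sqsubseteq>\<^bsub>L'\<^esub> \<psi> y"
    proof (cases "x \<in> A.D")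
      case xD: True
      have px: "\<psi> x \<in> B.D" "B.Y (\<psi> x) = \<phi> (A.Y x)" using psiD[OF xD] by auto
      show ?thesis
      proof (cases "y \<in> A.D")
        case yD: True
        have py: "\<psi> y \<in> B.D" "B.Y (\<psi> y) = \<phi> (A.Y y)" using psiD[OF yD] by auto
        have "x \<sqsubseteq>\<^bsub>L\<^esub> y \<longleftrightarrow> A.Y x \<sqsubseteq>\<^bsub>L\<^esub> A.Y y" using A.Y_mono[OF xD yD] .
        also have "\<dots> \<longleftrightarrow> \<phi> (A.Y x) \<sqsubseteq>\<^bsub>L'\<^esub> \<phi> (A.Y y)" using ordS A.YS xD yD by simp
        also have "\<dots> \<longleftrightarrow> \<psi> x \<sqsubseteq>\<^bsub>L'\<^esub> \<psi> y" using B.Y_mono[OF px(1) py(1)] px py by simp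
        finally show ?thesis .
      next
        case yD: False
        then have yS: "y \<in> A.S" using carrA yc by auto
        have "x \<sqsubseteq>\<^bsub>L\<^esub> y \<longleftrightarrow> A.Y x \<sqsubseteq>\<^bsub>L\<^esub> y" using A.Y_char[OF xD yS] .
        also have "\<dots> \<longleftrightarrow> \<phi> (A.Y x) \<sqsubseteq>\<^bsub>L'\<^esub> \<phi> y" using ordS A.YS xD yS by simp
        also have "\<dots> \<longleftrightarrow> \<psi> x \<sqsubseteq>\<^bsub>L'\<^esub> \<psi> y" using B.Y_char[OF px(1) phiS[OF yS]] px psiS[OF yS] by simp
        finally show ?thesis .
      qed
    next
      case xD: False
      then have xS: "x \<in> A.S" using carrA xc by auto
      show ?thesis
      proof (cases "y \<in> A.D")
        case yD: True
        have py: "\<psi> y \<in> B.D" using psiD[OF yD] by auto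
        have n1: "\<not> x \<sqsubseteq>\<^bsub>L\<^esub> y"
        proof
          assume "x \<sqsubseteq>\<^bsub>L\<^esub> y"
          then have "x \<sqsubseteq>\<^bsub>L\<^esub> c" using A.le_trans[OF _ _ xc yc A.cc] yD A.D_mem by simp
          then show False using xS A.S_mem by simp
        qed
        have pxS: "\<psi> x \<in> B.S" using psiS[OF xS] phiS[OF xS] by simp
        have pxc: "\<psi> x \<in> carrier L'" and pyc: "\<psi> y \<in> carrier L'" using psic xc yc by auto
        have n2: "\<not> \<psi> x \<sqsubseteq>\<^bsub>L'\<^esub> \<psi> y"
        proof
          assume "\<psi> x \<sqsubseteq>\<^bsub>L'\<^esub> \<psi> y"
          then have "\<psi> x \<sqsubseteq>\<^bsub>L'\<^esub> c'" using B.le_trans[OF _ _ pxc pyc B.cc] py B.D_mem by simp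
          then show False using pxS B.S_mem by simp
        qed
        show ?thesis using n1 n2 by simp
      next
        case yD: False
        then have yS: "y \<in> A.S" using carrA yc by auto
        show ?thesis using ordS[OF xS yS] psiS[OF xS] psiS[OF yS] by simp
      qed
    qed
  qed
  have mixed: "\<And>y z. y \<in> carrier L \<Longrightarrow> z \<in> carrier L \<Longrightarrow> \<not> y \<sqsubseteq>\<^bsub>L\<^esub> z \<Longrightarrow> \<not> z \<sqsubseteq>\<^bsub>L\<^esub> y \<Longrightarrow>
       y \<in> A.D \<or> z \<in> A.D \<Longrightarrow> (lam y z \<longleftrightarrow> lam' (\<psi> y) (\<psi> z))"
  proof -
    fix y z assume yc: "y \<in> carrier L" and zc: "z \<in> carrier L" and i: "\<not> y \<sqsubseteq>\<^bsub>L\<^esub> z" "\<not> z \<sqsubseteq>\<^bsub>L\<^esub> y"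
      and d: "y \<in> A.D \<or> z \<in> A.D"
    have i': "\<not> \<psi> y \<sqsubseteq>\<^bsub>L'\<^esub> \<psi> z" "\<not> \<psi> z \<sqsubseteq>\<^bsub>L'\<^esub> \<psi> y" using ord yc zc i by auto
    have pc: "\<psi> y \<in> carrier L'" "\<psi> z \<in> carrier L'" using psic yc zc by auto
    show "lam y z \<longleftrightarrow> lam' (\<psi> y) (\<psi> z)"
    proof (cases "y \<in> A.D")
      case True
      have "y \<in> A.B" using True A.D_B by auto
      then have l1: "lam y z" using A.B_lam[OF _ zc i] by simp
      have "\<psi> y \<in> B.B" using psiD[OF True] B.D_B by auto
      then have l2: "lam' (\<psi> y) (\<psi> z)" using B.B_lam[OF _ pc(2) i'] by simp
      show ?thesis using l1 l2 by simp
    next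
      case False
      then have zD: "z \<in> A.D" using d by simp
      have "z \<in> A.B" using zD A.D_B by auto
      then have l1: "lam z y" using A.B_lam[OF _ yc i(2) i(1)] by simp
      have "\<psi> z \<in> B.B" using psiD[OF zD] B.D_B by auto
      then have l2: "lam' (\<psi> z) (\<psi> y)" using B.B_lam[OF _ pc(1) i'(2) i'(1)] by simp
      show ?thesis using A.lam_asym[OF l1] B.lam_asym[OF l2] by simp
    qed
  qed
  have up: "\<forall>x y z. covers L x y \<and> covers L x z \<longrightarrow> (lam y z \<longleftrightarrow> lam' (\<psi> y) (\<psi> z))"
  proof (intro allI impI)
    fix x y z assume a: "covers L x y \<and> covers L x z"
    have c: "x \<in> carrier L" "y \<in> carrier L" "z \<in> carrier L" using a A.covers_carrier by auto
    show "lam y z \<longleftrightarrow> lam' (\<psi> y) (\<psi> z)"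
    proof (cases "y = z")
      case True then show ?thesis using A.lam_irrefl B.lam_irrefl by simp
    next
      case yz: False
      have i: "\<not> y \<sqsubseteq>\<^bsub>L\<^esub> z" "\<not> z \<sqsubseteq>\<^bsub>L\<^esub> y" using A.covers_upper_inc a yz by metis+
      show ?thesis
      proof (cases "y \<in> A.D \<or> z \<in> A.D")
        case True then show ?thesis using mixed[OF c(2) c(3) i] by simp
      next
        case False
        then have yzS: "y \<in> A.S" "z \<in> A.S" using carrA c by auto
        have xS: "x \<in> A.S"
        proof (rule ccontr)
          assume "x \<notin> A.S"
          then have "x \<in> A.D" using carrA c by auto
          then have "y = z" using A.Y_uniq yzS a by metis
          then show False using yz by simp
        qed
        have "covers A.LS x y" "covers A.LS x z" using A.covers_S' xS yzS a by auto
        then have "A.lamS y z \<longleftrightarrow> B.lamS (\<phi> y) (\<phi> z)" using lamupS by simp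
        then show ?thesis using A.lamS_iff B.lamS_iff yzS phiS psiS by simp
      qed
    qed
  qed
  have dn: "\<forall>x y z. covers L y x \<and> covers L z x \<longrightarrow> (lam y z \<longleftrightarrow> lam' (\<psi> y) (\<psi> z))"
  proof (intro allI impI)
    fix x y z assume a: "covers L y x \<and> covers L z x"
    have c: "x \<in> carrier L" "y \<in> carrier L" "z \<in> carrier L" using a A.covers_carrier by auto
    show "lam y z \<longleftrightarrow> lam' (\<psi> y) (\<psi> z)"
    proof (cases "y = z")
      case True then show ?thesis using A.lam_irrefl B.lam_irrefl by simp
    next
      case yz: False
      have i: "\<not> y \<sqsubseteq>\<^bsub>L\<^esub> z" "\<not> z \<sqsubseteq>\<^bsub>L\<^esub> y" using A.covers_lower_inc a yz by metis+
      show ?thesis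
      proof (cases "y \<in> A.D \<or> z \<in> A.D")
        case True then show ?thesis using mixed[OF c(2) c(3) i] by simp
      next
        case False
        then have yzS: "y \<in> A.S" "z \<in> A.S" using carrA c by auto
        have xS: "x \<in> A.S" using A.S_up[OF yzS(1) c(1)] a A.covers_le by simp
        have "covers A.LS y x" "covers A.LS z x" using A.covers_S' xS yzS a by auto
        then have "A.lamS y z \<longleftrightarrow> B.lamS (\<phi> y) (\<phi> z)" using lamdnS by simp
        then show ?thesis using A.lamS_iff B.lamS_iff yzS phiS psiS by simp
      qed
    qed
  qed
  have inj: "inj_on \<psi> (carrier L)"
  proof (rule inj_onI)
    fix x y assume xc: "x \<in> carrier L" and yc: "y \<in> carrier L" and e: "\<psi> x = \<psi> y"
    have "\<psi> x \<sqsubseteq>\<^bsub>L'\<^esub> \<psi> y" "\<psi> y \<sqsubseteq>\<^bsub>L'\<^esub> \<psi> x" using e psic[OF xc] by simp_all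
    then have "x \<sqsubseteq>\<^bsub>L\<^esub> y" "y \<sqsubseteq>\<^bsub>L\<^esub> x" using ord xc yc by auto
    then show "x = y" using A.le_antisym xc yc by simp
  qed
  have sw': "simw B.LS B.lamS A.LS A.lamS (the_inv_into A.S \<phi>)"
    using sim_inv[OF PA PB sw] by simp
  have bijS': "bij_betw (the_inv_into A.S \<phi>) B.S A.S" using bij_betw_the_inv_into[OF bijS] .
  have onto: "\<psi> ` carrier L = carrier L'"
  proof
    show "\<psi> ` carrier L \<subseteq> carrier L'" using psic by auto
  next
    show "carrier L' \<subseteq> \<psi> ` carrier L"
    proof
      fix z' assume zc: "z' \<in> carrier L'"
      show "z' \<in> \<psi> ` carrier L"
      proof (cases "z' \<in> B.D")
        case True
        let ?w = "B.Y z'"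
        have wB: "?w \<in> B.E.B" using B.Y_BS[OF True] .
        have wS: "?w \<in> B.S" using B.YS[OF True] .
        have "the_inv_into A.S \<phi> ?w \<in> A.E.B" using sim_B[OF PB PA sw' wB] by simp
        then obtain b where bD: "b \<in> A.D" and yb: "A.Y b = the_inv_into A.S \<phi> ?w" using A.Y_onto by metis
        have "\<phi> (A.Y b) = ?w" using yb f_the_inv_into_f_bij_betw[OF bijS wS] by simp
        then have "B.Y (\<psi> b) = B.Y z'" using psiD[OF bD] by simp
        then have "\<psi> b = z'" using B.Y_inj psiD[OF bD] True by simp
        moreover have "b \<in> carrier L" using bD A.D_sub by auto
        ultimately show ?thesis by auto
      next
        case False
        then have zS: "z' \<in> B.S" using carrB zc by auto
        have "z' \<in> \<phi> ` A.S" using bijS zS unfolding bij_betw_def by simp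
        then obtain z where zA: "z \<in> A.S" and "\<phi> z = z'" by (rule imageE) simp
        then have "\<psi> z = z'" using psiS by simp
        moreover have "z \<in> carrier L" using zA A.S_sub by auto
        ultimately show ?thesis by auto
      qed
    qed
  qed
  have "simw L lam L' lam' \<psi>"
    unfolding simw_def bij_betw_def using inj onto ord up dn by simp
  then show ?thesis using similar_iff by metis
qed

theorem mainTheorem5:
  fixes L :: "'a gorder" and lam :: "'a \<Rightarrow> 'a \<Rightarrow> bool" and c :: 'a
  assumes ssd: "slim_semimodular_diagram L lam"
    and cl: "is_cl L lam c"
    and coat: "coatom L c"
  shows "is_chain L (down_set L c) \<and> down_set L c \<subseteq> left_boundary L lam \<and>
    sublattice L (carrier L - down_set L c) \<and>
    slim_semimodular_diagram (induced_order L (carrier L - down_set L c))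
                             (induced_left lam (carrier L - down_set L c)) \<and>
    card (carrier L - down_set L c) = card (carrier L) - lattice_length L \<and>
    (\<forall>(L' :: 'b gorder) lam' c'.
       slim_semimodular_diagram L' lam' \<and> is_cl L' lam' c' \<and> coatom L' c' \<and>
       similar (induced_order L (carrier L - down_set L c)) (induced_left lam (carrier L - down_set L c))
               (induced_order L' (carrier L' - down_set L' c')) (induced_left lam' (carrier L' - down_set L' c'))
       \<longrightarrow> similar L lam L' lam')"
proof -
  have A: "cl L lam c"
    using ssd cl coat unfolding slim_semimodular_diagram_def cl_def cl_axioms_def pd_def by simp
  interpret A: cl L lam c by (rule A)
  have p1: "is_chain L (down_set L c)"
    unfolding is_chain_def using A.D_sub A.D_chain A.D_eq by auto
  have p2: "down_set L c \<subseteq> left_boundary L lam" using A.D_B A.D_eq by simp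
  have p3: "sublattice L (carrier L - down_set L c)" using A.sublat A.S_eq by simp
  have p4: "slim_semimodular_diagram (induced_order L (carrier L - down_set L c))
                             (induced_left lam (carrier L - down_set L c))" using A.ssdS A.S_eq by simp
  have p5: "card (carrier L - down_set L c) = card (carrier L) - lattice_length L" using A.card_S A.S_eq by simp
  have p6: "\<forall>(L' :: 'b gorder) lam' c'.
       slim_semimodular_diagram L' lam' \<and> is_cl L' lam' c' \<and> coatom L' c' \<and>
       similar (induced_order L (carrier L - down_set L c)) (induced_left lam (carrier L - down_set L c))
               (induced_order L' (carrier L' - down_set L' c')) (induced_left lam' (carrier L' - down_set L' c'))
       \<longrightarrow> similar L lam L' lam'"
  proof (intro allI impI)
    fix L' :: "'b gorder" and lam' c'
    assume a: "slim_semimodular_diagram L' lam' \<and> is_cl L' lam' c' \<and> coatom L' c' \<and>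
       similar (induced_order L (carrier L - down_set L c)) (induced_left lam (carrier L - down_set L c))
               (induced_order L' (carrier L' - down_set L' c')) (induced_left lam' (carrier L' - down_set L' c'))"
    have B: "cl L' lam' c'"
      using a unfolding slim_semimodular_diagram_def cl_def cl_axioms_def pd_def by simp
    show "similar L lam L' lam'" using uniq[OF A B] a by simp
  qed
  show ?thesis using p1 p2 p3 p4 p5 p6 by simp
qed

end
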